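(* Let $L_1,\dots,L_n\subset\mathbb{C}^2$ be $n\ge3$ distinct complex lines through the origin, and let $a_1,\dots,a_n\in\mathbb{R}\setminus\{0\}$ all have the same sign. Then there exists a Dunkl inner product adapted to $(L_i,a_i)$ if and only if $$|a_j|<\sum_{i\ne j}|a_i|\quad\text{for all } j.$$ Moreover, whenever this inequality holds, the Dunkl inner product is unique up to multiplication by a positive scalar.
   Context: A Dunkl inner product adapted to $(L_i,a_i)$ is a positive definite Hermitian inner product $\langle\cdot,\cdot\rangle_H$ on $\mathbb{C}^2$ such that $\sum_i a_i P_i=c\cdot\mathrm{Id}$ for some $c\in\mathbb{C}$, where $P_i$ is the orthogonal projection onto the $\langle\cdot,\cdot\rangle_H$-orthogonal complement $L_i^{\perp}$ of $L_i$. *)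

theory Defs
  imports "HOL-Analysis.Analysis"
begin

definition complex_line :: "(complex^2) set \<Rightarrow> bool" where
  "complex_line L \<longleftrightarrow> (\<exists>v. v \<noteq> 0 \<and> L = range (\<lambda>c::complex. c *s v))"

definition herm_ip :: "(complex^2 \<Rightarrow> complex^2 \<Rightarrow> complex) \<Rightarrow> bool" where
  "herm_ip h \<longleftrightarrow>
     (\<forall>x y z. h (x + y) z = h x z + h y z) \<and>
     (\<forall>(c::complex) x y. h (c *s x) y = c * h x y) \<and>
     (\<forall>x y. h y x = cnj (h x y)) \<and>
     (\<forall>x. x \<noteq> 0 \<longrightarrow> Re (h x x) > 0)"

definition orth_compl :: "(complex^2 \<Rightarrow> complex^2 \<Rightarrow> complex) \<Rightarrow> (complex^2) set \<Rightarrow> (complex^2) set" where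
  "orth_compl h L = {x. \<forall>y\<in>L. h x y = 0}"

definition orth_proj :: "(complex^2 \<Rightarrow> complex^2 \<Rightarrow> complex) \<Rightarrow> (complex^2) set \<Rightarrow> complex^2 \<Rightarrow> complex^2" where
  "orth_proj h W x = (THE p. p \<in> W \<and> (\<forall>w\<in>W. h (x - p) w = 0))"

definition dunkl_adapted :: "nat \<Rightarrow> (nat \<Rightarrow> (complex^2) set) \<Rightarrow> (nat \<Rightarrow> real)
     \<Rightarrow> (complex^2 \<Rightarrow> complex^2 \<Rightarrow> complex) \<Rightarrow> bool" where
  "dunkl_adapted n L a h \<longleftrightarrow> herm_ip h \<and>
     (\<exists>c::complex. \<forall>x. (\<Sum>i<n. complex_of_real (a i) *s orth_proj h (orth_compl h (L i)) x) = c *s x)"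

end

theory Submission
  imports Defs
begin

lemma herm_add1: "herm_ip h \<Longrightarrow> h (x + y) z = h x z + h y z"
  unfolding herm_ip_def by blast
lemma herm_smult1: "herm_ip h \<Longrightarrow> h (c *s x) y = c * h x y"
  unfolding herm_ip_def by blast
lemma herm_cnj: "herm_ip h \<Longrightarrow> h y x = cnj (h x y)"
  unfolding herm_ip_def by blast
lemma herm_pos: "herm_ip h \<Longrightarrow> x \<noteq> 0 \<Longrightarrow> Re (h x x) > 0"
  unfolding herm_ip_def by blast

lemma herm_add2: "herm_ip h \<Longrightarrow> h x (y + z) = h x y + h x z"
  by (metis herm_cnj herm_add1 complex_cnj_add complex_cnj_cnj)
lemma herm_smult2: "herm_ip h \<Longrightarrow> h x (c *s y) = cnj c * h x y"
  by (metis herm_cnj herm_smult1 complex_cnj_mult complex_cnj_cnj)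
lemma herm_zero1: "herm_ip h \<Longrightarrow> h 0 y = 0"
  using herm_smult1[of h 0 0 y] by simp
lemma herm_zero2: "herm_ip h \<Longrightarrow> h y 0 = 0"
  using herm_smult2[of h y 0 0] by simp
lemma herm_neg1: "herm_ip h \<Longrightarrow> h (- x) y = - h x y"
  using herm_smult1[of h "-1" x y] by (simp add: vector_sneg_minus1[symmetric])
lemma herm_diff1: "herm_ip h \<Longrightarrow> h (x - y) z = h x z - h y z"
  using herm_add1[of h x "-y" z] herm_neg1[of h y z] by simp
lemma herm_neg2: "herm_ip h \<Longrightarrow> h y (- x) = - h y x"
  using herm_smult2[of h y "-1" x] by (simp add: vector_sneg_minus1[symmetric])
lemma herm_diff2: "herm_ip h \<Longrightarrow> h z (x - y) = h z x - h z y"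
  using herm_add2[of h z x "-y"] herm_neg2[of h z y] by simp
lemma herm_sum1: "herm_ip h \<Longrightarrow> h (sum f S) y = (\<Sum>i\<in>S. h (f i) y)"
  by (induction S rule: infinite_finite_induct) (auto simp: herm_zero1 herm_add1)
lemma herm_real: "herm_ip h \<Longrightarrow> h x x = complex_of_real (Re (h x x))"
proof -
  assume h: "herm_ip h"
  have "h x x = cnj (h x x)" using herm_cnj[OF h, of x x] .
  hence "Im (h x x) = 0" by (simp add: complex_eq_iff)
  thus ?thesis by (simp add: complex_eq_iff)
qed
lemma herm_nz: "herm_ip h \<Longrightarrow> x \<noteq> 0 \<Longrightarrow> h x x \<noteq> 0"
  using herm_pos[of h x] by force

definition E1 :: "complex^2" where "E1 = axis 1 1"
definition E2 :: "complex^2" where "E2 = axis 2 1"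

lemma decomp2: "(y::complex^2) = y$1 *s E1 + y$2 *s E2"
  by (simp add: vec_eq_iff forall_2 E1_def E2_def axis_def)

lemma herm_expand: "herm_ip h \<Longrightarrow> h y z = y$1 * h E1 z + y$2 * h E2 z"
  by (subst decomp2) (simp add: herm_add1 herm_smult1)

definition wperp :: "(complex^2 \<Rightarrow> complex^2 \<Rightarrow> complex) \<Rightarrow> complex^2 \<Rightarrow> complex^2" where
  "wperp h u = h E2 u *s E1 - h E1 u *s E2"

lemma wperp_orth: "herm_ip h \<Longrightarrow> h (wperp h u) u = 0"
  by (simp add: wperp_def herm_diff1 herm_smult1 mult.commute)

lemma wperp_nz: assumes "herm_ip h" "u \<noteq> 0" shows "wperp h u \<noteq> 0"
proof
  assume "wperp h u = 0"
  hence "h E2 u = 0 \<and> h E1 u = 0"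
    by (auto simp: wperp_def vec_eq_iff forall_2 E1_def E2_def axis_def)
  hence "h u u = 0" using herm_expand[OF assms(1), of u u] by simp
  thus False using herm_nz[OF assms] by simp
qed

lemma kernel_line:
  assumes h: "herm_ip h" and u: "u \<noteq> 0" and r: "h r u = 0"
  shows "\<exists>l. r = l *s wperp h u"
proof -
  define c1 where "c1 = h E1 u"
  define c2 where "c2 = h E2 u"
  have e: "r$1 * c1 + r$2 * c2 = 0" using r herm_expand[OF h, of r u] by (simp add: c1_def c2_def)
  have nz: "c1 \<noteq> 0 \<or> c2 \<noteq> 0"
  proof (rule ccontr)
    assume "\<not> ?thesis"
    hence "h u u = 0" using herm_expand[OF h, of u u] by (simp add: c1_def c2_def)
    thus False using herm_nz[OF h u] by simp
  qed
  have w: "wperp h u = c2 *s E1 - c1 *s E2" by (simp add: wperp_def c1_def c2_def)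
  show ?thesis
  proof (cases "c1 = 0")
    case True
    hence "c2 \<noteq> 0" using nz by simp
    hence "r$2 = 0" using e True by simp
    thus ?thesis using True \<open>c2 \<noteq> 0\<close>
      by (intro exI[of _ "r$1 / c2"]) (simp add: w vec_eq_iff forall_2 E1_def E2_def axis_def)
  next
    case False
    have "r$1 = - r$2 * c2 / c1" using e False by (simp add: field_simps add_eq_0_iff)
    thus ?thesis using False
      by (intro exI[of _ "- r$2 / c1"]) (simp add: w vec_eq_iff forall_2 E1_def E2_def axis_def)
  qed
qed

lemma orth_compl_line:
  assumes h: "herm_ip h" and L: "L = range (\<lambda>c::complex. c *s v)"
  shows "orth_compl h L = {p. h p v = 0}"
proof -
  have "(\<forall>y\<in>L. h p y = 0) \<longleftrightarrow> h p v = 0" for p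
  proof
    assume "\<forall>y\<in>L. h p y = 0" thus "h p v = 0" using L by (metis rangeI vector_smult_lid)
  next
    assume "h p v = 0" thus "\<forall>y\<in>L. h p y = 0" using L by (auto simp: herm_smult2[OF h])
  qed
  thus ?thesis by (auto simp: orth_compl_def)
qed

lemma orth_proj_line:
  assumes h: "herm_ip h" and v: "v \<noteq> 0" and L: "L = range (\<lambda>c::complex. c *s v)"
  shows "orth_proj h (orth_compl h L) x = x - (h x v / h v v) *s v"
proof -
  have W: "orth_compl h L = {p. h p v = 0}" by (rule orth_compl_line[OF h L])
  define p0 where "p0 = x - (h x v / h v v) *s v"
  have nz: "h v v \<noteq> 0" using herm_nz[OF h v] .
  have p0W: "h p0 v = 0" using nz by (simp add: p0_def herm_diff1[OF h] herm_smult1[OF h])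
  have p0o: "h (x - p0) w = 0" if "h w v = 0" for w
  proof -
    have "h v w = 0" using herm_cnj[OF h, of w v] that by simp
    thus ?thesis by (simp add: p0_def herm_smult1[OF h])
  qed
  show ?thesis unfolding orth_proj_def W p0_def[symmetric]
  proof (rule the_equality)
    show "p0 \<in> {p. h p v = 0} \<and> (\<forall>w\<in>{p. h p v = 0}. h (x - p0) w = 0)"
      using p0W p0o by auto
  next
    fix p assume p: "p \<in> {p. h p v = 0} \<and> (\<forall>w\<in>{p. h p v = 0}. h (x - p) w = 0)"
    have d: "h (p - p0) v = 0" using p p0W by (simp add: herm_diff1[OF h])
    have "h (x - p) (p - p0) = 0" using p d by blast
    moreover have "h (x - p0) (p - p0) = 0" using p0o d by blast
    ultimately have "h ((x - p0) - (x - p)) (p - p0) = 0" by (simp add: herm_diff1[OF h])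
    hence "h (p - p0) (p - p0) = 0" by simp
    thus "p = p0" using herm_nz[OF h, of "p - p0"] by auto
  qed
qed

definition Kc :: "nat \<Rightarrow> (nat \<Rightarrow> complex^2) \<Rightarrow> (nat \<Rightarrow> real) \<Rightarrow> (complex^2 \<Rightarrow> complex^2 \<Rightarrow> complex) \<Rightarrow> bool" where
  "Kc n v a h \<longleftrightarrow> (\<exists>d. \<forall>x. (\<Sum>i<n. (complex_of_real (a i) * (h x (v i) / h (v i) (v i))) *s v i) = d *s x)"

lemma dunkl_iff:
  assumes h: "herm_ip h" and vL: "\<forall>i<n. v i \<noteq> 0 \<and> L i = range (\<lambda>c::complex. c *s v i)"
  shows "dunkl_adapted n L a h \<longleftrightarrow> Kc n v a h"
proof -
  define A where "A = (\<Sum>i<n. complex_of_real (a i))"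
  define G where "G x = (\<Sum>i<n. (complex_of_real (a i) * (h x (v i) / h (v i) (v i))) *s v i)" for x
  have eq: "(\<Sum>i<n. complex_of_real (a i) *s orth_proj h (orth_compl h (L i)) x) = A *s x - G x" for x
  proof -
    have "(\<Sum>i<n. complex_of_real (a i) *s orth_proj h (orth_compl h (L i)) x)
        = (\<Sum>i<n. complex_of_real (a i) *s x - (complex_of_real (a i) * (h x (v i) / h (v i) (v i))) *s v i)"
      by (rule sum.cong) (simp_all add: orth_proj_line[OF h _ refl] vL vector_ssub_ldistrib vector_smult_assoc)
    also have "\<dots> = A *s x - G x"
      by (simp add: sum_subtractf G_def A_def vec_eq_iff sum_distrib_right)
    finally show ?thesis .
  qed
  show ?thesis
  proof
    assume "dunkl_adapted n L a h"
    then obtain c where c: "\<And>x. A *s x - G x = c *s x" unfolding dunkl_adapted_def eq by blast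
    have "G x = (A - c) *s x" for x using c[of x] by (simp add: vector_sub_rdistrib algebra_simps)
    thus "Kc n v a h" unfolding Kc_def G_def by blast
  next
    assume "Kc n v a h"
    then obtain d where d: "\<And>x. G x = d *s x" unfolding Kc_def G_def by blast
    have "A *s x - G x = (A - d) *s x" for x using d[of x] by (simp add: vector_sub_rdistrib)
    thus "dunkl_adapted n L a h" unfolding dunkl_adapted_def eq using h by blast
  qed
qed

lemma Kc_neg: "Kc n v (\<lambda>i. - a i) h \<longleftrightarrow> Kc n v a h"
proof -
  have s: "(\<Sum>i<n. (complex_of_real (- a i) * (h x (v i) / h (v i) (v i))) *s v i)
     = - (\<Sum>i<n. (complex_of_real (a i) * (h x (v i) / h (v i) (v i))) *s v i)" for x
    by (simp add: sum_negf[symmetric] vector_smult_lneg)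
  show ?thesis unfolding Kc_def s
  proof
    assume "\<exists>d. \<forall>x. - (\<Sum>i<n. (complex_of_real (a i) * (h x (v i) / h (v i) (v i))) *s v i) = d *s x"
    then obtain d where "\<forall>x. - (\<Sum>i<n. (complex_of_real (a i) * (h x (v i) / h (v i) (v i))) *s v i) = d *s x" by blast
    hence "\<forall>x. (\<Sum>i<n. (complex_of_real (a i) * (h x (v i) / h (v i) (v i))) *s v i) = (- d) *s x"
      by (simp add: vector_smult_lneg minus_equation_iff)
    thus "\<exists>d. \<forall>x. (\<Sum>i<n. (complex_of_real (a i) * (h x (v i) / h (v i) (v i))) *s v i) = d *s x" by blast
  next
    assume "\<exists>d. \<forall>x. (\<Sum>i<n. (complex_of_real (a i) * (h x (v i) / h (v i) (v i))) *s v i) = d *s x"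
    then obtain d where "\<forall>x. (\<Sum>i<n. (complex_of_real (a i) * (h x (v i) / h (v i) (v i))) *s v i) = d *s x" by blast
    hence "\<forall>x. - (\<Sum>i<n. (complex_of_real (a i) * (h x (v i) / h (v i) (v i))) *s v i) = (- d) *s x"
      by (simp add: vector_smult_lneg)
    thus "\<exists>d. \<forall>x. - (\<Sum>i<n. (complex_of_real (a i) * (h x (v i) / h (v i) (v i))) *s v i) = d *s x" by blast
  qed
qed

lemma Kc_cong: assumes "\<And>i. i < n \<Longrightarrow> a i = b i" shows "Kc n v a h \<longleftrightarrow> Kc n v b h"
proof -
  have "(\<Sum>i<n. (complex_of_real (a i) * (h x (v i) / h (v i) (v i))) *s v i)
     = (\<Sum>i<n. (complex_of_real (b i) * (h x (v i) / h (v i) (v i))) *s v i)" for x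
    using assms by (intro sum.cong) auto
  thus ?thesis unfolding Kc_def by simp
qed

lemma herm_Re_pos_nz: "herm_ip h \<Longrightarrow> x \<noteq> 0 \<Longrightarrow> h x x = complex_of_real (Re (h x x)) \<and> Re (h x x) > 0"
  using herm_real herm_pos by blast

lemma cnj_mult_self: "cnj z * z = (complex_of_real (cmod z))^2"
  using complex_norm_square[of z] by (simp add: mult.commute)
lemma mult_cnj_self: "z * cnj z = (complex_of_real (cmod z))^2"
  using complex_norm_square[of z] by simp

lemma basis_rep:
  assumes h: "herm_ip h" and u: "u \<noteq> 0"
  shows "y = (h y u / h u u) *s u + (h y (wperp h u) / h (wperp h u) (wperp h u)) *s wperp h u"
proof -
  define w where "w = wperp h u"
  have wu: "h w u = 0" using wperp_orth[OF h] by (simp add: w_def)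
  have uw: "h u w = 0" using herm_cnj[OF h, of w u] wu by simp
  have wnz: "w \<noteq> 0" using wperp_nz[OF h u] by (simp add: w_def)
  define r where "r = y - (h y u / h u u) *s u"
  have "h r u = 0" using herm_nz[OF h u] by (simp add: r_def herm_diff1[OF h] herm_smult1[OF h])
  then obtain l where l: "r = l *s w" using kernel_line[OF h u] by (auto simp: w_def)
  have "h r w = h y w" by (simp add: r_def herm_diff1[OF h] herm_smult1[OF h] uw)
  hence "l * h w w = h y w" using l by (simp add: herm_smult1[OF h])
  hence "l = h y w / h w w" using herm_nz[OF h wnz] by (simp add: field_simps)
  hence "y = (h y u / h u u) *s u + (h y w / h w w) *s w" using l by (simp add: r_def algebra_simps)
  thus ?thesis by (simp add: w_def)
qed

lemma parseval:
  assumes h: "herm_ip h" and u: "u \<noteq> 0"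
  shows "Re (h y y) = (cmod (h y u))^2 / Re (h u u) + (cmod (h y (wperp h u)))^2 / Re (h (wperp h u) (wperp h u))"
proof -
  define w where "w = wperp h u"
  have wu: "h w u = 0" using wperp_orth[OF h] by (simp add: w_def)
  have uw: "h u w = 0" using herm_cnj[OF h, of w u] wu by simp
  have wnz: "w \<noteq> 0" using wperp_nz[OF h u] by (simp add: w_def)
  define al where "al = h y u / h u u"
  define be where "be = h y w / h w w"
  have y: "y = al *s u + be *s w" using basis_rep[OF h u, of y] by (simp add: al_def be_def w_def)
  have "h y y = h y (al *s u + be *s w)" using y by simp
  also have "\<dots> = cnj al * h y u + cnj be * h y w" by (simp add: herm_add2[OF h] herm_smult2[OF h])
  finally have e: "h y y = cnj al * h y u + cnj be * h y w" .
  obtain qu where qu: "h u u = complex_of_real qu" "qu > 0" using herm_Re_pos_nz[OF h u] by blast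
  obtain qw where qw: "h w w = complex_of_real qw" "qw > 0" using herm_Re_pos_nz[OF h wnz] by blast
  have "cnj al * h y u = complex_of_real ((cmod (h y u))^2 / qu)"
    by (simp add: al_def qu cnj_mult_self mult_cnj_self mult.commute)
  moreover have "cnj be * h y w = complex_of_real ((cmod (h y w))^2 / qw)"
    by (simp add: be_def qw cnj_mult_self mult_cnj_self mult.commute)
  ultimately have "h y y = complex_of_real ((cmod (h y u))^2 / qu + (cmod (h y w))^2 / qw)"
    using e by simp
  thus ?thesis using qu qw by (simp add: w_def)
qed

lemma Kc_test:
  assumes h: "herm_ip h" and K: "Kc n v b h" and vnz: "\<forall>i<n. v i \<noteq> 0"
  shows "\<exists>d. \<forall>z. d * h z z = complex_of_real (\<Sum>i<n. b i * (cmod (h (v i) z))^2 / Re (h (v i) (v i)))"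
proof -
  obtain d where d: "\<And>x. (\<Sum>i<n. (complex_of_real (b i) * (h x (v i) / h (v i) (v i))) *s v i) = d *s x"
    using K unfolding Kc_def by blast
  have "d * h z z = complex_of_real (\<Sum>i<n. b i * (cmod (h (v i) z))^2 / Re (h (v i) (v i)))" for z
  proof -
    have "d * h z z = h (d *s z) z" by (simp add: herm_smult1[OF h])
    also have "\<dots> = h (\<Sum>i<n. (complex_of_real (b i) * (h z (v i) / h (v i) (v i))) *s v i) z"
      by (subst d) (rule refl)
    also have "\<dots> = (\<Sum>i<n. complex_of_real (b i) * (h z (v i) / h (v i) (v i)) * h (v i) z)"
      by (simp add: herm_sum1[OF h] herm_smult1[OF h])
    also have "\<dots> = (\<Sum>i<n. complex_of_real (b i * (cmod (h (v i) z))^2 / Re (h (v i) (v i))))"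
    proof (rule sum.cong)
      fix i assume "i \<in> {..<n}"
      hence "v i \<noteq> 0" using vnz by auto
      then obtain q where q: "h (v i) (v i) = complex_of_real q" "q > 0" using herm_Re_pos_nz[OF h] by blast
      have c: "h z (v i) = cnj (h (v i) z)" by (rule herm_cnj[OF h])
      show "complex_of_real (b i) * (h z (v i) / h (v i) (v i)) * h (v i) z
          = complex_of_real (b i * (cmod (h (v i) z))^2 / Re (h (v i) (v i)))"
        by (simp add: q c cnj_mult_self mult_cnj_self mult.commute)
    qed simp
    finally show ?thesis by simp
  qed
  thus ?thesis by blast
qed

lemma kernel_two:
  assumes h: "herm_ip h" and u: "u \<noteq> 0" and "h x u = 0" "h y u = 0" "x \<noteq> 0"
  shows "\<exists>c. y = c *s x"
proof -
  obtain l1 where l1: "x = l1 *s wperp h u" using kernel_line[OF h u assms(3)] by blast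
  obtain l2 where l2: "y = l2 *s wperp h u" using kernel_line[OF h u assms(4)] by blast
  have "l1 \<noteq> 0" using l1 assms(5) by auto
  hence "y = (l2 / l1) *s x" using l1 l2 by (simp add: vector_smult_assoc)
  thus ?thesis by blast
qed

lemma three_pick:
  fixes n j :: nat
  assumes "n \<ge> 3" "j < n"
  shows "\<exists>i1 i2. i1 < n \<and> i2 < n \<and> i1 \<noteq> j \<and> i2 \<noteq> j \<and> i1 \<noteq> i2"
proof (cases "j = 0")
  case True thus ?thesis using assms by (intro exI[of _ 1] exI[of _ 2]) auto
next
  case False
  show ?thesis
  proof (cases "j = 1")
    case True thus ?thesis using assms by (intro exI[of _ 0] exI[of _ 2]) auto
  next
    case False thus ?thesis using assms \<open>j \<noteq> 0\<close> by (intro exI[of _ 0] exI[of _ 1]) auto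
  qed
qed

lemma necessity:
  assumes h: "herm_ip h" and K: "Kc n v b h" and bpos: "\<forall>i<n. b i > 0"
    and vnz: "\<forall>i<n. v i \<noteq> 0"
    and NP: "\<forall>i<n. \<forall>k<n. i \<noteq> k \<longrightarrow> (\<forall>c. v k \<noteq> c *s v i)"
    and n3: "n \<ge> 3" and j: "j < n"
  shows "b j < (\<Sum>i\<in>{..<n} - {j}. b i)"
proof -
  define u where "u = v j"
  have u: "u \<noteq> 0" using vnz j by (simp add: u_def)
  define w where "w = wperp h u"
  have wu: "h w u = 0" using wperp_orth[OF h] by (simp add: w_def)
  have uw: "h u w = 0" using herm_cnj[OF h, of w u] wu by simp
  have wnz: "w \<noteq> 0" using wperp_nz[OF h u] by (simp add: w_def)
  obtain qu where qu: "h u u = complex_of_real qu" "qu > 0" using herm_Re_pos_nz[OF h u] by blast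
  obtain qw where qw: "h w w = complex_of_real qw" "qw > 0" using herm_Re_pos_nz[OF h wnz] by blast
  define Q where "Q i = Re (h (v i) (v i))" for i
  define P where "P i = (cmod (h (v i) u))^2 / qu" for i
  define R where "R i = (cmod (h (v i) w))^2 / qw" for i
  have QPR: "Q i = P i + R i" for i
    using parseval[OF h u, of "v i"] qu qw by (simp add: Q_def P_def R_def w_def)
  have Ppos: "P i \<ge> 0" "R i \<ge> 0" for i using qu qw by (auto simp: P_def R_def)
  have Qpos: "Q i > 0" if "i < n" for i using herm_pos[OF h] vnz that by (simp add: Q_def)
  obtain d where d: "\<And>z. d * h z z = complex_of_real (\<Sum>i<n. b i * (cmod (h (v i) z))^2 / Q i)"
    using Kc_test[OF h K vnz] unfolding Q_def by blast
  have "d * complex_of_real qu = complex_of_real (qu * (\<Sum>i<n. b i * P i / Q i))"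
    using d[of u] qu by (simp add: P_def sum_distrib_left)
  hence "d * complex_of_real qu = complex_of_real (\<Sum>i<n. b i * P i / Q i) * complex_of_real qu"
    by (simp only: of_real_mult mult.commute)
  hence d1: "d = complex_of_real (\<Sum>i<n. b i * P i / Q i)" using qu(2)
    by (simp only: mult_cancel_right of_real_eq_0_iff) simp
  have "d * complex_of_real qw = complex_of_real (qw * (\<Sum>i<n. b i * R i / Q i))"
    using d[of w] qw by (simp add: R_def sum_distrib_left)
  hence "d * complex_of_real qw = complex_of_real (\<Sum>i<n. b i * R i / Q i) * complex_of_real qw"
    by (simp only: of_real_mult mult.commute)
  hence d2: "d = complex_of_real (\<Sum>i<n. b i * R i / Q i)" using qw(2)
    by (simp only: mult_cancel_right of_real_eq_0_iff) simp
  have "complex_of_real (\<Sum>i<n. b i * P i / Q i) = complex_of_real (\<Sum>i<n. b i * R i / Q i)"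
    by (simp only: d1[symmetric] d2[symmetric])
  hence eq: "(\<Sum>i<n. b i * P i / Q i) = (\<Sum>i<n. b i * R i / Q i)" by (simp only: of_real_eq_iff)
  have Pj: "P j = qu" using qu by (simp add: P_def u_def[symmetric] power2_eq_square)
  have Rj: "R j = 0" using uw by (simp add: R_def u_def[symmetric])
  have Qj: "Q j = qu" using QPR[of j] Pj Rj by simp
  have s1: "(\<Sum>i<n. b i * P i / Q i) = b j + (\<Sum>i\<in>{..<n}-{j}. b i * P i / Q i)"
    using j Pj Qj qu by (simp add: sum.remove[of "{..<n}" j])
  have s2: "(\<Sum>i<n. b i * R i / Q i) = (\<Sum>i\<in>{..<n}-{j}. b i * R i / Q i)"
    using j Rj by (simp add: sum.remove[of "{..<n}" j])
  have exP: "\<exists>i\<in>{..<n}-{j}. P i > 0"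
  proof (rule ccontr)
    assume nx: "\<not> (\<exists>i\<in>{..<n}-{j}. P i > 0)"
    have z: "\<forall>i\<in>{..<n}-{j}. h (v i) u = 0"
    proof
      fix i assume i: "i \<in> {..<n}-{j}"
      hence "P i \<le> 0" using nx i by (meson not_less)
      hence "P i = 0" using Ppos(1)[of i] by simp
      thus "h (v i) u = 0" using qu by (simp add: P_def)
    qed
    obtain i1 i2 where i: "i1 < n" "i2 < n" "i1 \<noteq> j" "i2 \<noteq> j" "i1 \<noteq> i2" using three_pick[OF n3 j] by blast
    obtain c where "v i2 = c *s v i1"
      using kernel_two[OF h u, of "v i1" "v i2"] z i vnz by auto
    thus False using NP i by blast
  qed
  have "(\<Sum>i\<in>{..<n}-{j}. b i * (R i - P i) / Q i) < (\<Sum>i\<in>{..<n}-{j}. b i)"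
  proof (rule sum_strict_mono_ex1)
    show "\<forall>i\<in>{..<n}-{j}. b i * (R i - P i) / Q i \<le> b i"
    proof
      fix i assume i: "i \<in> {..<n}-{j}"
      have "b i * (R i - P i) \<le> b i * Q i" using bpos i Ppos[of i] QPR[of i]
        by (intro mult_left_mono) auto
      thus "b i * (R i - P i) / Q i \<le> b i" using Qpos i by (simp add: divide_le_eq)
    qed
    show "\<exists>i\<in>{..<n}-{j}. b i * (R i - P i) / Q i < b i"
    proof -
      obtain i where i: "i \<in> {..<n}-{j}" "P i > 0" using exP by blast
      have "b i * (R i - P i) < b i * Q i" using bpos i Ppos[of i] QPR[of i]
        by (intro mult_strict_left_mono) auto
      hence "b i * (R i - P i) / Q i < b i" using Qpos i by (simp add: divide_less_eq)
      thus ?thesis using i by blast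
    qed
  qed simp
  moreover have "(\<Sum>i\<in>{..<n}-{j}. b i * (R i - P i) / Q i)
      = (\<Sum>i\<in>{..<n}-{j}. b i * R i / Q i) - (\<Sum>i\<in>{..<n}-{j}. b i * P i / Q i)"
    by (simp add: sum_subtractf[symmetric] diff_divide_distrib right_diff_distrib)
  ultimately show ?thesis using eq s1 s2 by linarith
qed

lemma quad_root: assumes "(A::complex) \<noteq> 0" shows "\<exists>w. A * w^2 + B * w + C = 0"
proof -
  define s where "s = csqrt (B^2 - 4*A*C)"
  have s2: "s^2 = B^2 - 4*A*C" by (simp add: s_def)
  define w where "w = (- B + s) / (2 * A)"
  have "A * w^2 + B * w + C = (s^2 - (B^2 - 4*A*C)) / (4 * A)"
    using assms by (simp add: w_def field_simps power2_eq_square)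
  thus ?thesis using s2 by auto
qed

lemma quad_expand:
  fixes g11 g12 g21 g22 k11 k12 k21 k22 w :: complex
  shows "(g21 + w*g22)*(k11 + w*k12) - (g11 + w*g12)*(k21 + w*k22)
    = (g22*k12 - g12*k22)*w^2 + (g21*k12 + g22*k11 - g11*k22 - g12*k21)*w + (g21*k11 - g11*k21)"
  by algebra

lemma common_vec:
  assumes h1: "herm_ip h1" and h2: "herm_ip h2"
  shows "\<exists>e. e \<noteq> 0 \<and> h2 (wperp h1 e) e = 0"
proof -
  have D: "h2 (wperp h1 e) e = h1 E2 e * h2 E1 e - h1 E1 e * h2 E2 e" for e
    by (simp add: wperp_def herm_diff1[OF h2] herm_smult1[OF h2])
  define A where "A = h1 E2 E2 * h2 E1 E2 - h1 E1 E2 * h2 E2 E2"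
  define B where "B = h1 E2 E1 * h2 E1 E2 + h1 E2 E2 * h2 E1 E1 - h1 E1 E1 * h2 E2 E2 - h1 E1 E2 * h2 E2 E1"
  define C where "C = h1 E2 E1 * h2 E1 E1 - h1 E1 E1 * h2 E2 E1"
  have E2nz: "E2 \<noteq> 0" by (simp add: E2_def vec_eq_iff axis_def)
  show ?thesis
  proof (cases "A = 0")
    case True
    thus ?thesis using E2nz by (intro exI[of _ E2]) (simp add: D A_def)
  next
    case False
    then obtain w where w: "A * w^2 + B * w + C = 0" using quad_root by blast
    define e where "e = E1 + cnj w *s E2"
    have enz: "e \<noteq> 0" by (simp add: e_def vec_eq_iff E1_def E2_def axis_def exI[of _ 1])
    have hE: "hh E e = hh E E1 + w * hh E E2" if "herm_ip hh" for hh E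
      by (simp add: e_def herm_add2[OF that] herm_smult2[OF that])
    have "h2 (wperp h1 e) e = A * w^2 + B * w + C"
      unfolding D unfolding hE[OF h1] hE[OF h2] A_def B_def C_def by (rule quad_expand)
    thus ?thesis using enz w by (intro exI[of _ e]) simp
  qed
qed

lemma bilin_basis:
  assumes h: "herm_ip h" and "h e f = 0" "h f e = 0"
  shows "h (a1 *s e + b1 *s f) (a2 *s e + b2 *s f) = a1 * cnj a2 * h e e + b1 * cnj b2 * h f f"
  using assms by (simp add: herm_add1[OF h] herm_add2[OF h] herm_smult1[OF h] herm_smult2[OF h] algebra_simps)

lemma test_basis:
  assumes h: "herm_ip h" and K: "Kc n v b h" and vnz: "\<forall>i<n. v i \<noteq> 0"
    and ef: "h e f = 0" "h f e = 0" and enz: "e \<noteq> 0" and fnz: "f \<noteq> 0"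
    and rep: "\<forall>i<n. v i = al i *s e + be i *s f"
  shows "(\<Sum>i<n. b i * ((cmod (al i))^2 * Re (h e e) - (cmod (be i))^2 * Re (h f f))
            / ((cmod (al i))^2 * Re (h e e) + (cmod (be i))^2 * Re (h f f))) = 0"
proof -
  obtain A where A: "h e e = complex_of_real A" "A > 0" using herm_Re_pos_nz[OF h enz] by blast
  obtain B where B: "h f f = complex_of_real B" "B > 0" using herm_Re_pos_nz[OF h fnz] by blast
  define a where "a i = (cmod (al i))^2" for i
  define c where "c i = (cmod (be i))^2" for i
  have hve: "h (v i) e = al i * complex_of_real A" if "i < n" for i
    using rep that A ef by (simp add: herm_add1[OF h] herm_smult1[OF h])
  have hvf: "h (v i) f = be i * complex_of_real B" if "i < n" for i
    using rep that B ef by (simp add: herm_add1[OF h] herm_smult1[OF h])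
  have Q: "Re (h (v i) (v i)) = a i * A + c i * B" if "i < n" for i
  proof -
    have "h (v i) (v i) = al i * cnj (al i) * h e e + be i * cnj (be i) * h f f"
      using rep that bilin_basis[OF h ef] by metis
    thus ?thesis by (simp add: A B a_def c_def mult_cnj_self)
  qed
  obtain d where d: "\<And>z. d * h z z = complex_of_real (\<Sum>i<n. b i * (cmod (h (v i) z))^2 / Re (h (v i) (v i)))"
    using Kc_test[OF h K vnz] by blast
  have "(\<Sum>i<n. b i * (cmod (h (v i) e))^2 / Re (h (v i) (v i))) = A * (\<Sum>i<n. b i * (a i * A) / (a i * A + c i * B))"
    unfolding sum_distrib_left
    by (rule sum.cong) (simp_all add: hve Q a_def norm_mult power_mult_distrib power2_eq_square)
  hence "d * complex_of_real A = complex_of_real (\<Sum>i<n. b i * (a i * A) / (a i * A + c i * B)) * complex_of_real A"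
    using d[of e] A by (simp only: of_real_mult mult.commute)
  hence d1: "d = complex_of_real (\<Sum>i<n. b i * (a i * A) / (a i * A + c i * B))"
    using A(2) by (simp only: mult_cancel_right of_real_eq_0_iff) simp
  have "(\<Sum>i<n. b i * (cmod (h (v i) f))^2 / Re (h (v i) (v i))) = B * (\<Sum>i<n. b i * (c i * B) / (a i * A + c i * B))"
    unfolding sum_distrib_left
    by (rule sum.cong) (simp_all add: hvf Q c_def norm_mult power_mult_distrib power2_eq_square)
  hence "d * complex_of_real B = complex_of_real (\<Sum>i<n. b i * (c i * B) / (a i * A + c i * B)) * complex_of_real B"
    using d[of f] B by (simp only: of_real_mult mult.commute)
  hence d2: "d = complex_of_real (\<Sum>i<n. b i * (c i * B) / (a i * A + c i * B))"
    using B(2) by (simp only: mult_cancel_right of_real_eq_0_iff) simp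
  have "complex_of_real (\<Sum>i<n. b i * (a i * A) / (a i * A + c i * B)) = complex_of_real (\<Sum>i<n. b i * (c i * B) / (a i * A + c i * B))"
    by (simp only: d1[symmetric] d2[symmetric])
  hence eq: "(\<Sum>i<n. b i * (a i * A) / (a i * A + c i * B)) = (\<Sum>i<n. b i * (c i * B) / (a i * A + c i * B))"
    by (simp only: of_real_eq_iff)
  have "(\<Sum>i<n. b i * (a i * A - c i * B) / (a i * A + c i * B))
     = (\<Sum>i<n. b i * (a i * A) / (a i * A + c i * B)) - (\<Sum>i<n. b i * (c i * B) / (a i * A + c i * B))"
    unfolding sum_subtractf[symmetric] by (rule sum.cong) (simp_all add: diff_divide_distrib right_diff_distrib)
  hence "(\<Sum>i<n. b i * (a i * A - c i * B) / (a i * A + c i * B)) = 0" using eq by simp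
  thus ?thesis using A B by (simp add: a_def c_def)
qed

lemma key_real:
  fixes b P R :: "nat \<Rightarrow> real" and s t :: real
  assumes b: "\<forall>i<n. b i > 0" and P: "\<forall>i<n. P i \<ge> 0" and R: "\<forall>i<n. R i \<ge> 0"
    and PR: "\<forall>i<n. P i + R i > 0" and s: "s > 0" and t: "t > 0"
    and e1: "(\<Sum>i<n. b i * (P i - R i) / (P i + R i)) = 0"
    and e2: "(\<Sum>i<n. b i * (s * P i - t * R i) / (s * P i + t * R i)) = 0"
    and ex: "\<exists>i<n. P i > 0 \<and> R i > 0"
  shows "s = t"
proof -
  have pos2: "s * P i + t * R i > 0" if "i < n" for i
  proof -
    have "s * P i \<ge> 0" "t * R i \<ge> 0" using P R s t that by auto
    moreover have "s * P i > 0 \<or> t * R i > 0" using PR P R s t that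
      by (metis add.right_neutral add_0 mult_pos_pos order_less_le)
    ultimately show ?thesis by linarith
  qed
  have trm: "b i * (P i - R i) / (P i + R i) - b i * (s * P i - t * R i) / (s * P i + t * R i)
      = (t - s) * (2 * b i * P i * R i / ((P i + R i) * (s * P i + t * R i)))" if "i < n" for i
    using PR[rule_format, OF that] pos2[OF that]
    by (simp add: field_simps)
  have "0 = (\<Sum>i<n. b i * (P i - R i) / (P i + R i) - b i * (s * P i - t * R i) / (s * P i + t * R i))"
    using e1 e2 by (simp add: sum_subtractf)
  also have "\<dots> = (t - s) * (\<Sum>i<n. 2 * b i * P i * R i / ((P i + R i) * (s * P i + t * R i)))"
    unfolding sum_distrib_left by (rule sum.cong) (simp_all add: trm)
  finally have z: "(t - s) * (\<Sum>i<n. 2 * b i * P i * R i / ((P i + R i) * (s * P i + t * R i))) = 0" by simp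
  obtain i where i: "i < n" "P i > 0" "R i > 0" using ex by blast
  have "(\<Sum>i<n. 2 * b i * P i * R i / ((P i + R i) * (s * P i + t * R i))) > 0"
  proof (rule sum_pos2[of "{..<n}" i])
    show "0 < 2 * b i * P i * R i / ((P i + R i) * (s * P i + t * R i))"
      using i b PR pos2 by (auto intro!: divide_pos_pos mult_pos_pos)
    show "0 \<le> 2 * b k * P k * R k / ((P k + R k) * (s * P k + t * R k))" if k: "k \<in> {..<n}" for k
    proof -
      have "2 * b k * P k * R k \<ge> 0" using b P R k by (simp add: less_imp_le)
      moreover have "(P k + R k) * (s * P k + t * R k) > 0" using PR pos2 k by simp
      ultimately show "0 \<le> 2 * b k * P k * R k / ((P k + R k) * (s * P k + t * R k))" by simp
    qed
  qed (use i in auto)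
  thus ?thesis using z by simp
qed

lemma par2:
  fixes s1 s2 :: complex and g x y :: "complex^2"
  assumes "x = s1 *s g" "y = s2 *s g" "x \<noteq> 0"
  shows "\<exists>c. y = c *s x"
proof -
  have "s1 \<noteq> 0" using assms by auto
  hence "y = (s2 / s1) *s x" using assms by (simp add: vector_smult_assoc)
  thus ?thesis by blast
qed

lemma uniqueness:
  assumes h1: "herm_ip h1" and h2: "herm_ip h2" and K1: "Kc n v b h1" and K2: "Kc n v b h2"
    and bpos: "\<forall>i<n. b i > 0" and vnz: "\<forall>i<n. v i \<noteq> 0"
    and NP: "\<forall>i<n. \<forall>k<n. i \<noteq> k \<longrightarrow> (\<forall>c. v k \<noteq> c *s v i)"
    and n3: "n \<ge> 3"
  shows "\<exists>r::real. r > 0 \<and> (\<forall>x y. h2 x y = complex_of_real r * h1 x y)"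
proof -
  obtain e where enz: "e \<noteq> 0" and e2: "h2 (wperp h1 e) e = 0" using common_vec[OF h1 h2] by blast
  define f where "f = wperp h1 e"
  have fnz: "f \<noteq> 0" using wperp_nz[OF h1 enz] by (simp add: f_def)
  have fe1: "h1 f e = 0" using wperp_orth[OF h1] by (simp add: f_def)
  have ef1: "h1 e f = 0" using herm_cnj[OF h1, of f e] fe1 by simp
  have fe2: "h2 f e = 0" using e2 by (simp add: f_def)
  have ef2: "h2 e f = 0" using herm_cnj[OF h2, of f e] fe2 by simp
  define al where "al y = h1 y e / h1 e e" for y
  define be where "be y = h1 y f / h1 f f" for y
  have rep: "y = al y *s e + be y *s f" for y using basis_rep[OF h1 enz, of y] by (simp add: al_def be_def f_def)
  obtain A1 where A1: "h1 e e = complex_of_real A1" "A1 > 0" using herm_Re_pos_nz[OF h1 enz] by blast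
  obtain B1 where B1: "h1 f f = complex_of_real B1" "B1 > 0" using herm_Re_pos_nz[OF h1 fnz] by blast
  obtain A2 where A2: "h2 e e = complex_of_real A2" "A2 > 0" using herm_Re_pos_nz[OF h2 enz] by blast
  obtain B2 where B2: "h2 f f = complex_of_real B2" "B2 > 0" using herm_Re_pos_nz[OF h2 fnz] by blast
  define a where "a i = (cmod (al (v i)))^2" for i
  define c where "c i = (cmod (be (v i)))^2" for i
  have repv: "\<forall>i<n. v i = al (v i) *s e + be (v i) *s f" using rep by blast
  have t1: "(\<Sum>i<n. b i * (a i * A1 - c i * B1) / (a i * A1 + c i * B1)) = 0"
    using test_basis[OF h1 K1 vnz ef1 fe1 enz fnz repv] A1 B1 by (simp add: a_def c_def)
  have t2: "(\<Sum>i<n. b i * (a i * A2 - c i * B2) / (a i * A2 + c i * B2)) = 0"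
    using test_basis[OF h2 K2 vnz ef2 fe2 enz fnz repv] A2 B2 by (simp add: a_def c_def)
  define P where "P i = a i * A1" for i
  define R where "R i = c i * B1" for i
  define s where "s = A2 / A1"
  define t where "t = B2 / B1"
  have sP: "s * P i = a i * A2" for i using A1 by (simp add: s_def P_def)
  have tR: "t * R i = c i * B2" for i using B1 by (simp add: t_def R_def)
  have nzv: "al (v i) \<noteq> 0 \<or> be (v i) \<noteq> 0" if "i < n" for i
  proof (rule ccontr)
    assume "\<not> ?thesis"
    hence "v i = 0" using repv that by auto
    thus False using vnz that by auto
  qed
  have same: "\<not> ((al (v i) = 0 \<and> al (v k) = 0) \<or> (be (v i) = 0 \<and> be (v k) = 0))"
    if "i < n" "k < n" "i \<noteq> k" for i k
  proof
    assume "(al (v i) = 0 \<and> al (v k) = 0) \<or> (be (v i) = 0 \<and> be (v k) = 0)"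
    hence "\<exists>cc. v k = cc *s v i"
    proof
      assume H: "al (v i) = 0 \<and> al (v k) = 0"
      have vi: "v i = be (v i) *s f" using repv[rule_format, OF that(1)] H by simp
      have vk: "v k = be (v k) *s f" using repv[rule_format, OF that(2)] H by simp
      show ?thesis by (rule par2[OF vi vk]) (use vnz that in auto)
    next
      assume H: "be (v i) = 0 \<and> be (v k) = 0"
      have vi: "v i = al (v i) *s e" using repv[rule_format, OF that(1)] H by simp
      have vk: "v k = al (v k) *s e" using repv[rule_format, OF that(2)] H by simp
      show ?thesis by (rule par2[OF vi vk]) (use vnz that in auto)
    qed
    thus False using NP that by blast
  qed
  have ex: "\<exists>i<n. P i > 0 \<and> R i > 0"
  proof (rule ccontr)
    assume nx: "\<not> ?thesis"
    have X: "al (v i) = 0 \<or> be (v i) = 0" if "i < n" for i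
    proof (rule ccontr)
      assume "\<not> ?thesis"
      hence "P i > 0 \<and> R i > 0" using A1 B1 by (simp add: P_def R_def a_def c_def)
      thus False using nx that by blast
    qed
    have n012: "0 < n" "1 < n" "2 < n" using n3 by auto
    have x0: "al (v 0) = 0 \<or> be (v 0) = 0" using X n012 by blast
    have x1: "al (v 1) = 0 \<or> be (v 1) = 0" using X n012 by blast
    have x2: "al (v 2) = 0 \<or> be (v 2) = 0" using X n012 by blast
    have s01: "\<not> ((al (v 0) = 0 \<and> al (v 1) = 0) \<or> (be (v 0) = 0 \<and> be (v 1) = 0))"
      by (rule same) (use n012 in auto)
    have s02: "\<not> ((al (v 0) = 0 \<and> al (v 2) = 0) \<or> (be (v 0) = 0 \<and> be (v 2) = 0))"
      by (rule same) (use n012 in auto)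
    have s12: "\<not> ((al (v 1) = 0 \<and> al (v 2) = 0) \<or> (be (v 1) = 0 \<and> be (v 2) = 0))"
      by (rule same) (use n012 in auto)
    show False using x0 x1 x2 s01 s02 s12 by blast
  qed
  have Pnn: "\<forall>i<n. P i \<ge> 0" and Rnn: "\<forall>i<n. R i \<ge> 0" using A1 B1 by (simp_all add: P_def R_def a_def c_def)
  have PR: "\<forall>i<n. P i + R i > 0"
  proof (intro allI impI)
    fix i assume i: "i < n"
    have "P i > 0 \<or> R i > 0" using nzv[OF i] A1 B1 by (auto simp: P_def R_def a_def c_def)
    thus "P i + R i > 0" using Pnn Rnn i by (meson add_pos_nonneg add_nonneg_pos)
  qed
  have e1: "(\<Sum>i<n. b i * (P i - R i) / (P i + R i)) = 0" using t1 by (simp add: P_def R_def)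
  have e2': "(\<Sum>i<n. b i * (s * P i - t * R i) / (s * P i + t * R i)) = 0" using t2 by (simp add: sP tR)
  have st: "s = t"
    using key_real[OF bpos Pnn Rnn PR _ _ e1 e2' ex] A1 A2 B1 B2 by (simp add: s_def t_def)
  have A2r: "A2 = s * A1" and B2r: "B2 = s * B1" using A1 B1 st by (simp_all add: s_def t_def field_simps)
  have "h2 x y = complex_of_real s * h1 x y" for x y
  proof -
    have "h2 x y = h2 (al x *s e + be x *s f) (al y *s e + be y *s f)"
      using arg_cong2[OF rep[of x] rep[of y], of h2] .
    also have "\<dots> = al x * cnj (al y) * h2 e e + be x * cnj (be y) * h2 f f"
      by (rule bilin_basis[OF h2 ef2 fe2])
    also have "\<dots> = complex_of_real s * (al x * cnj (al y) * h1 e e + be x * cnj (be y) * h1 f f)"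
      by (simp add: A1 A2 B1 B2 A2r B2r algebra_simps)
    also have "\<dots> = complex_of_real s * h1 (al x *s e + be x *s f) (al y *s e + be y *s f)"
      by (simp add: bilin_basis[OF h1 ef1 fe1])
    also have "\<dots> = complex_of_real s * h1 x y"
      using arg_cong2[OF rep[of x] rep[of y], of h1] by simp
    finally show ?thesis .
  qed
  moreover have "s > 0" using A1 A2 by (simp add: s_def)
  ultimately show ?thesis by blast
qed

definition tt :: "real^3 \<Rightarrow> real" where "tt x = sqrt (1 + inner x x)"
definition Nv :: "complex^2 \<Rightarrow> real" where "Nv p = (cmod (p$1))^2 + (cmod (p$2))^2"
definition wv :: "complex^2 \<Rightarrow> real^3" where
  "wv p = vector [2 * Re (p$1 * cnj (p$2)), 2 * Im (p$1 * cnj (p$2)), (cmod (p$1))^2 - (cmod (p$2))^2]"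
definition Qf :: "complex^2 \<Rightarrow> real^3 \<Rightarrow> real" where "Qf p x = Nv p * tt x + inner x (wv p)"
definition hx :: "real^3 \<Rightarrow> complex^2 \<Rightarrow> complex^2 \<Rightarrow> complex" where
  "hx x y z = cnj (z$1) * (complex_of_real (tt x + x$3) * y$1 + Complex (x$1) (x$2) * y$2)
            + cnj (z$2) * (cnj (Complex (x$1) (x$2)) * y$1 + complex_of_real (tt x - x$3) * y$2)"

lemma inner3: "inner (x::real^3) y = x$1 * y$1 + x$2 * y$2 + x$3 * y$3"
  by (simp add: inner_vec_def sum_3)

lemma tt_sq: "(tt x)^2 = 1 + (x$1)^2 + (x$2)^2 + (x$3)^2"
  unfolding tt_def by (simp add: inner3 power2_eq_square add_nonneg_nonneg)

lemma tt_sq': "(tt x)^2 = 1 + (norm x)^2"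
  unfolding tt_def by (simp add: power2_norm_eq_inner)

lemma tt_pos: "tt x \<ge> 1"
  unfolding tt_def by simp

lemma tt_gt_norm: "tt x > norm x"
proof -
  have "(norm x)^2 < (tt x)^2" using tt_sq' by simp
  thus ?thesis using tt_pos by (meson abs_le_square_iff not_le norm_ge_zero abs_of_nonneg order_trans zero_le_one power2_less_imp_less)
qed

lemma tt_gt3: "\<bar>x$3\<bar> < tt x"
proof -
  have "0 < 1 + (x$1)^2 + (x$2)^2" by (simp add: add_pos_nonneg)
  hence "(x$3)^2 < (tt x)^2" using tt_sq[of x] by linarith
  hence "\<bar>x$3\<bar>^2 < (tt x)^2" by (simp only: power2_abs)
  moreover have "0 \<le> tt x" using tt_pos[of x] by linarith
  ultimately show ?thesis by (rule power2_less_imp_less)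
qed

lemma cmod_sq: "cmod z * cmod z = Re z * Re z + Im z * Im z"
  using cmod_power2[of z] by (simp add: power2_eq_square)

lemma Re_hx: "Re (hx x y y) = (tt x + x$3) * ((Re (y$1))^2 + (Im (y$1))^2) + (tt x - x$3) * ((Re (y$2))^2 + (Im (y$2))^2)
   + 2 * (x$1 * (Re (y$1) * Re (y$2) + Im (y$1) * Im (y$2)) - x$2 * (Re (y$1) * Im (y$2) - Im (y$1) * Re (y$2)))"
  by (simp add: hx_def algebra_simps power2_eq_square)

lemma herm_hx: "herm_ip (hx x)"
  unfolding herm_ip_def
proof (intro conjI allI impI)
  fix y z w :: "complex^2"
  show "hx x (y + z) w = hx x y w + hx x z w" by (simp add: hx_def algebra_simps)
next
  fix c :: complex and y z :: "complex^2"
  show "hx x (c *s y) z = c * hx x y z" by (simp add: hx_def algebra_simps)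
next
  fix y z :: "complex^2"
  show "hx x z y = cnj (hx x y z)" by (simp add: hx_def algebra_simps)
next
  fix y :: "complex^2" assume y: "y \<noteq> 0"
  define a where "a = Re (y$1)"
  define b where "b = Im (y$1)"
  define c where "c = Re (y$2)"
  define d where "d = Im (y$2)"
  define al where "al = tt x + x$3"
  define ga where "ga = tt x - x$3"
  have alp: "al > 0" using tt_gt3[of x] by (simp add: al_def)
  have ag: "al * ga - (x$1)^2 - (x$2)^2 = 1" using tt_sq[of x] by (simp add: al_def ga_def algebra_simps power2_eq_square)
  have R: "Re (hx x y y) = al * (a^2 + b^2) + ga * (c^2 + d^2) + 2 * (x$1 * (a*c + b*d) - x$2 * (a*d - b*c))"
    by (simp add: Re_hx a_def b_def c_def d_def al_def ga_def)
  have id: "al * Re (hx x y y) = (al*a + x$1*c - x$2*d)^2 + (al*b + x$1*d + x$2*c)^2 + (al * ga - (x$1)^2 - (x$2)^2) * (c^2 + d^2)"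
    unfolding R by (simp add: algebra_simps power2_eq_square)
  have nz: "a \<noteq> 0 \<or> b \<noteq> 0 \<or> c \<noteq> 0 \<or> d \<noteq> 0"
    using y by (auto simp: a_def b_def c_def d_def vec_eq_iff forall_2 complex_eq_iff)
  have "(al*a + x$1*c - x$2*d)^2 + (al*b + x$1*d + x$2*c)^2 + (c^2 + d^2) > 0"
  proof (cases "c = 0 \<and> d = 0")
    case True
    hence "a \<noteq> 0 \<or> b \<noteq> 0" using nz by auto
    hence "(al*a)^2 + (al*b)^2 > 0" using alp by (auto simp: add_pos_nonneg add_nonneg_pos)
    thus ?thesis using True by simp
  next
    case False
    hence "c^2 + d^2 > 0" by (auto simp: add_pos_nonneg add_nonneg_pos)
    thus ?thesis by (simp add: add_nonneg_pos add_nonneg_nonneg)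
  qed
  hence "al * Re (hx x y y) > 0" using id ag by simp
  thus "Re (hx x y y) > 0" using alp by (simp add: zero_less_mult_iff)
qed

lemma hx_self: "hx x p p = complex_of_real (Qf p x)"
  by (simp add: complex_eq_iff hx_def Qf_def Nv_def wv_def inner3 cmod_sq algebra_simps power2_eq_square)

lemma norm_wv: "norm (wv p) = Nv p"
proof -
  have "(norm (wv p))^2 = (Nv p)^2"
    unfolding power2_norm_eq_inner inner3 by (simp add: wv_def Nv_def cmod_sq algebra_simps power2_eq_square)
  thus ?thesis by (simp add: Nv_def power2_eq_iff_nonneg add_nonneg_nonneg)
qed

lemma Nv_pos: "p \<noteq> 0 \<Longrightarrow> Nv p > 0"
  by (auto simp: Nv_def vec_eq_iff forall_2 add_pos_nonneg add_nonneg_pos)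

lemma Qf_lower: "Qf p x \<ge> Nv p / (tt x + norm x)"
proof -
  have "inner x (wv p) \<ge> - (norm x * Nv p)"
    using Cauchy_Schwarz_ineq2[of x "wv p"] unfolding norm_wv by (simp add: abs_le_iff)
  hence "Qf p x \<ge> Nv p * (tt x - norm x)" by (simp add: Qf_def algebra_simps)
  moreover have "tt x - norm x = 1 / (tt x + norm x)"
  proof -
    have "(tt x - norm x) * (tt x + norm x) = 1" using tt_sq'[of x] by (simp add: algebra_simps power2_eq_square)
    moreover have "tt x + norm x > 0" using tt_pos[of x] norm_ge_zero[of x] by linarith
    ultimately show ?thesis by (simp add: field_simps)
  qed
  ultimately show ?thesis by simp
qed

lemma Qf_pos: "p \<noteq> 0 \<Longrightarrow> Qf p x > 0"
proof -
  assume "p \<noteq> 0"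
  hence "Nv p > 0" by (rule Nv_pos)
  moreover have "tt x + norm x > 0" using tt_pos[of x] norm_ge_zero[of x] by linarith
  ultimately have "Nv p / (tt x + norm x) > 0" by simp
  thus ?thesis using Qf_lower[of p x] by linarith
qed

lemma term1:
  fixes p q A B :: complex and b Q :: real
  assumes "Q \<noteq> 0"
  shows "complex_of_real b * ((cnj p * A + cnj q * B) / complex_of_real Q) * p
       = complex_of_real (b * (cmod p)^2 / Q) * A + (complex_of_real (b / Q) * (p * cnj q)) * B"
proof -
  have "complex_of_real b * ((cnj p * A + cnj q * B) / complex_of_real Q) * p
      = complex_of_real b / complex_of_real Q * ((p * cnj p) * A + (p * cnj q) * B)"
    using assms by (simp add: field_simps)
  also have "\<dots> = complex_of_real (b * (cmod p)^2 / Q) * A + (complex_of_real (b / Q) * (p * cnj q)) * B"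
    unfolding mult_cnj_self using assms by (simp add: field_simps)
  finally show ?thesis .
qed

lemma term2:
  fixes p q A B :: complex and b Q :: real
  assumes "Q \<noteq> 0"
  shows "complex_of_real b * ((cnj p * A + cnj q * B) / complex_of_real Q) * q
       = cnj (complex_of_real (b / Q) * (p * cnj q)) * A + complex_of_real (b * (cmod q)^2 / Q) * B"
proof -
  have "complex_of_real b * ((cnj p * A + cnj q * B) / complex_of_real Q) * q
      = complex_of_real b / complex_of_real Q * ((cnj p * q) * A + (q * cnj q) * B)"
    using assms by (simp add: field_simps)
  also have "\<dots> = cnj (complex_of_real (b / Q) * (p * cnj q)) * A + complex_of_real (b * (cmod q)^2 / Q) * B"
    unfolding mult_cnj_self using assms by (simp add: field_simps)
  finally show ?thesis .
qed

lemma grad_Kc: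
  assumes vnz: "\<forall>i<n. v i \<noteq> 0"
    and G: "\<And>k. (\<Sum>i<n. b i * (Nv (v i) * x$k / tt x + wv (v i) $ k) / Qf (v i) x) = 0"
  shows "Kc n v b (hx x)"
proof -
  define t where "t = tt x"
  have tpos: "t > 0" using tt_pos[of x] by (simp add: t_def)
  define Q where "Q i = Qf (v i) x" for i
  have Qpos: "Q i > 0" if "i < n" for i using Qf_pos vnz that by (simp add: Q_def)
  have Qnz: "Q i \<noteq> 0" if "i < n" for i using Qpos[OF that] by simp
  define p where "p i = v i $ 1" for i
  define q where "q i = v i $ 2" for i
  define SP where "SP = (\<Sum>i<n. b i * (cmod (p i))^2 / Q i)"
  define SQ where "SQ = (\<Sum>i<n. b i * (cmod (q i))^2 / Q i)"
  define SC where "SC = (\<Sum>i<n. complex_of_real (b i / Q i) * (p i * cnj (q i)))"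
  define S0 where "S0 = SP + SQ"
  have Gk: "x$k / t * S0 + (\<Sum>i<n. b i * wv (v i) $ k / Q i) = 0" for k
  proof -
    have "(\<Sum>i<n. b i * (Nv (v i) * x$k / tt x + wv (v i) $ k) / Qf (v i) x)
        = (\<Sum>i<n. x$k / t * (b i * (cmod (p i))^2 / Q i) + x$k / t * (b i * (cmod (q i))^2 / Q i) + b i * wv (v i) $ k / Q i)"
    proof (rule sum.cong)
      fix i assume "i \<in> {..<n}"
      hence "Qf (v i) x > 0" using Qpos by (simp add: Q_def)
      moreover have "tt x > 0" using tpos by (simp add: t_def)
      ultimately show "b i * (Nv (v i) * x$k / tt x + wv (v i) $ k) / Qf (v i) x
         = x$k / t * (b i * (cmod (p i))^2 / Q i) + x$k / t * (b i * (cmod (q i))^2 / Q i) + b i * wv (v i) $ k / Q i"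
        by (simp add: Nv_def p_def q_def Q_def t_def field_simps)
    qed simp
    also have "\<dots> = x$k / t * S0 + (\<Sum>i<n. b i * wv (v i) $ k / Q i)"
      unfolding S0_def SP_def SQ_def by (simp only: sum.distrib sum_distrib_left distrib_left)
    finally show ?thesis using G[of k] by simp
  qed
  have w1: "(\<Sum>i<n. b i * wv (v i) $ 1 / Q i) = 2 * Re SC"
    by (simp add: SC_def wv_def p_def q_def sum_distrib_left) (rule sum.cong; simp add: algebra_simps)
  have w2: "(\<Sum>i<n. b i * wv (v i) $ 2 / Q i) = 2 * Im SC"
    by (simp add: SC_def wv_def p_def q_def sum_distrib_left) (rule sum.cong; simp add: algebra_simps)
  have w3: "(\<Sum>i<n. b i * wv (v i) $ 3 / Q i) = SP - SQ"
    by (simp add: SP_def SQ_def wv_def p_def q_def sum_subtractf[symmetric] diff_divide_distrib right_diff_distrib)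
  have ReSC: "Re SC = - (S0 / (2 * t)) * x$1" using Gk[of 1] w1 tpos by (simp add: field_simps)
  have ImSC: "Im SC = - (S0 / (2 * t)) * x$2" using Gk[of 2] w2 tpos by (simp add: field_simps)
  have SC: "SC = - complex_of_real (S0 / (2 * t)) * Complex (x$1) (x$2)"
    using ReSC ImSC by (simp add: complex_eq_iff)
  have SPv: "SP = S0 * (t - x$3) / (2 * t)" using Gk[of 3] w3 tpos by (simp add: S0_def field_simps)
  have SQv: "SQ = S0 * (t + x$3) / (2 * t)" using Gk[of 3] w3 tpos by (simp add: S0_def field_simps)
  define d where "d = complex_of_real (S0 / (2 * t))"
  define be where "be = Complex (x$1) (x$2)"
  have bb: "be * cnj be = complex_of_real ((x$1)^2 + (x$2)^2)"
    by (simp add: be_def complex_eq_iff power2_eq_square)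
  have one: "(t - x$3) * (t + x$3) - ((x$1)^2 + (x$2)^2) = 1"
    using tt_sq[of x] by (simp add: t_def algebra_simps power2_eq_square)
  define A where "A y = complex_of_real (t + x$3) * y$1 + be * y$2" for y :: "complex^2"
  define B where "B y = cnj be * y$1 + complex_of_real (t - x$3) * y$2" for y :: "complex^2"
  have hxy: "hx x y (v i) = cnj (p i) * A y + cnj (q i) * B y" for y i
    by (simp add: hx_def A_def B_def be_def p_def q_def t_def)
  have hvv: "hx x (v i) (v i) = complex_of_real (Q i)" for i by (simp add: hx_self Q_def)
  have c1: "(\<Sum>i<n. complex_of_real (b i) * (hx x y (v i) / hx x (v i) (v i)) * p i)
      = complex_of_real SP * A y + SC * B y" for y
  proof -
    have "(\<Sum>i<n. complex_of_real (b i) * (hx x y (v i) / hx x (v i) (v i)) * p i)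
        = (\<Sum>i<n. complex_of_real (b i * (cmod (p i))^2 / Q i) * A y + (complex_of_real (b i / Q i) * (p i * cnj (q i))) * B y)"
      unfolding hvv unfolding hxy by (intro sum.cong refl term1) (simp add: Qnz)
    also have "\<dots> = complex_of_real SP * A y + SC * B y"
      by (simp add: sum.distrib sum_distrib_right SP_def SC_def)
    finally show ?thesis .
  qed
  have c2: "(\<Sum>i<n. complex_of_real (b i) * (hx x y (v i) / hx x (v i) (v i)) * q i)
      = cnj SC * A y + complex_of_real SQ * B y" for y
  proof -
    have "(\<Sum>i<n. complex_of_real (b i) * (hx x y (v i) / hx x (v i) (v i)) * q i)
        = (\<Sum>i<n. cnj (complex_of_real (b i / Q i) * (p i * cnj (q i))) * A y + complex_of_real (b i * (cmod (q i))^2 / Q i) * B y)"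
      unfolding hvv unfolding hxy by (intro sum.cong refl term2) (simp add: Qnz)
    also have "\<dots> = cnj SC * A y + complex_of_real SQ * B y"
      by (simp add: sum.distrib sum_distrib_right SQ_def SC_def)
    finally show ?thesis .
  qed
  have f1: "complex_of_real SP * A y + SC * B y = d * y$1" for y
  proof -
    have "complex_of_real SP * A y + SC * B y
        = y$1 * (complex_of_real SP * complex_of_real (t + x$3) + SC * cnj be) + y$2 * (complex_of_real SP * be + SC * complex_of_real (t - x$3))"
      by (simp add: A_def B_def algebra_simps)
    also have "SC * cnj be = - complex_of_real (S0 / (2 * t)) * (be * cnj be)" by (simp add: SC be_def)
    also have "complex_of_real SP * be + SC * complex_of_real (t - x$3) = 0" by (simp add: SC SPv be_def)
    also have "complex_of_real SP * complex_of_real (t + x$3) + - complex_of_real (S0 / (2 * t)) * (be * cnj be)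
        = complex_of_real (S0 / (2 * t) * ((t - x$3) * (t + x$3) - ((x$1)^2 + (x$2)^2)))"
      unfolding bb SPv of_real_mult[symmetric] of_real_minus[symmetric] of_real_add[symmetric] of_real_eq_iff
      using tpos by (simp add: field_simps)
    finally show ?thesis using one by (simp add: d_def)
  qed
  have f2: "cnj SC * A y + complex_of_real SQ * B y = d * y$2" for y
  proof -
    have "cnj SC * A y + complex_of_real SQ * B y
        = y$1 * (cnj SC * complex_of_real (t + x$3) + complex_of_real SQ * cnj be) + y$2 * (cnj SC * be + complex_of_real SQ * complex_of_real (t - x$3))"
      by (simp add: A_def B_def algebra_simps)
    also have "cnj SC * be = - complex_of_real (S0 / (2 * t)) * (be * cnj be)" by (simp add: SC be_def)
    also have "cnj SC * complex_of_real (t + x$3) + complex_of_real SQ * cnj be = 0" by (simp add: SC SQv be_def)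
    also have "- complex_of_real (S0 / (2 * t)) * (be * cnj be) + complex_of_real SQ * complex_of_real (t - x$3)
        = complex_of_real (S0 / (2 * t) * ((t - x$3) * (t + x$3) - ((x$1)^2 + (x$2)^2)))"
      unfolding bb SQv of_real_mult[symmetric] of_real_minus[symmetric] of_real_add[symmetric] of_real_eq_iff
      using tpos by (simp add: field_simps)
    finally show ?thesis using one by (simp add: d_def)
  qed
  have "(\<Sum>i<n. (complex_of_real (b i) * (hx x y (v i) / hx x (v i) (v i))) *s v i) = d *s y" for y
  proof -
    have "(\<Sum>i<n. (complex_of_real (b i) * (hx x y (v i) / hx x (v i) (v i))) *s v i) $ 1 = d * y$1"
      using c1[of y] f1[of y] by (simp add: p_def)
    moreover have "(\<Sum>i<n. (complex_of_real (b i) * (hx x y (v i) / hx x (v i) (v i))) *s v i) $ 2 = d * y$2"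
      using c2[of y] f2[of y] by (simp add: q_def)
    ultimately show ?thesis by (simp add: vec_eq_iff forall_2)
  qed
  thus ?thesis unfolding Kc_def by blast
qed

definition uu :: "complex^2 \<Rightarrow> real^3" where "uu p = (1 / Nv p) *\<^sub>R wv p"

lemma norm_uu: "p \<noteq> 0 \<Longrightarrow> norm (uu p) = 1"
  using Nv_pos[of p] by (simp add: uu_def norm_wv)

lemma hopf_inj:
  assumes p: "p \<noteq> 0" and r: "r \<noteq> 0" and eq: "uu p = uu r"
  shows "\<exists>c. r = c *s p"
proof -
  have Np: "Nv p > 0" using Nv_pos[OF p] .
  have Nr: "Nv r > 0" using Nv_pos[OF r] .
  define l where "l = Nv p / Nv r"
  have lpos: "l > 0" using Np Nr by (simp add: l_def)
  have weq: "wv p = l *\<^sub>R wv r"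
  proof -
    have "wv p = Nv p *\<^sub>R uu p" using Np by (simp add: uu_def)
    also have "\<dots> = Nv p *\<^sub>R uu r" using eq by simp
    also have "\<dots> = l *\<^sub>R wv r" using Nr by (simp add: uu_def l_def)
    finally show ?thesis .
  qed
  have NpNr: "Nv p = l * Nv r" using Nr by (simp add: l_def)
  have c1: "Re (p$1 * cnj (p$2)) = l * Re (r$1 * cnj (r$2))"
    using arg_cong[OF weq, of "\<lambda>w. w$1"] by (simp add: wv_def) (simp add: algebra_simps)
  have c2: "Im (p$1 * cnj (p$2)) = l * Im (r$1 * cnj (r$2))"
    using arg_cong[OF weq, of "\<lambda>w. w$2"] by (simp add: wv_def) (simp add: algebra_simps)
  have c3: "(cmod (p$1))^2 - (cmod (p$2))^2 = l * ((cmod (r$1))^2 - (cmod (r$2))^2)"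
    using arg_cong[OF weq, of "\<lambda>w. w$3"] by (simp add: wv_def)
  have c4: "(cmod (p$1))^2 + (cmod (p$2))^2 = l * ((cmod (r$1))^2 + (cmod (r$2))^2)"
    using NpNr by (simp add: Nv_def)
  have m1: "(cmod (p$1))^2 = l * (cmod (r$1))^2" using c3 c4 by (simp add: algebra_simps)
  have m2: "(cmod (p$2))^2 = l * (cmod (r$2))^2" using c3 c4 by (simp add: algebra_simps)
  have e1: "p$1 * cnj (p$1) = complex_of_real l * (r$1 * cnj (r$1))"
    unfolding mult_cnj_self using m1 by (metis of_real_mult of_real_power)
  have e2: "p$2 * cnj (p$2) = complex_of_real l * (r$2 * cnj (r$2))"
    unfolding mult_cnj_self using m2 by (metis of_real_mult of_real_power)
  have e3: "p$1 * cnj (p$2) = complex_of_real l * (r$1 * cnj (r$2))"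
    using c1 c2 by (simp add: complex_eq_iff)
  have e3': "p$2 * cnj (p$1) = complex_of_real l * (r$2 * cnj (r$1))"
    using arg_cong[OF e3, of cnj] by (simp add: mult.commute)
  define s where "s = cnj (p$1) * r$1 + cnj (p$2) * r$2"
  have Nrc: "complex_of_real (Nv r) = r$1 * cnj (r$1) + r$2 * cnj (r$2)"
    by (simp add: Nv_def mult_cnj_self)
  have "s * p$1 = complex_of_real (Nv p) * r$1"
  proof -
    have "s * p$1 = (p$1 * cnj (p$1)) * r$1 + (p$1 * cnj (p$2)) * r$2" by (simp add: s_def algebra_simps)
    also have "\<dots> = complex_of_real l * (r$1 * cnj (r$1) + r$2 * cnj (r$2)) * r$1"
      unfolding e1 e3 by (simp add: algebra_simps)
    finally show ?thesis unfolding NpNr Nrc[symmetric] by simp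
  qed
  moreover have "s * p$2 = complex_of_real (Nv p) * r$2"
  proof -
    have "s * p$2 = (p$2 * cnj (p$1)) * r$1 + (p$2 * cnj (p$2)) * r$2" by (simp add: s_def algebra_simps)
    also have "\<dots> = complex_of_real l * (r$1 * cnj (r$1) + r$2 * cnj (r$2)) * r$2"
      unfolding e2 e3' by (simp add: algebra_simps)
    finally show ?thesis unfolding NpNr Nrc[symmetric] by simp
  qed
  ultimately have "r = (s / complex_of_real (Nv p)) *s p"
    using Np by (simp add: vec_eq_iff forall_2 field_simps)
  thus ?thesis by blast
qed

lemma near:
  assumes p: "p \<noteq> 0" and lt: "Qf p x < eta * Nv p * tt x"
  shows "(norm ((1 / tt x) *\<^sub>R x + uu p))^2 < 2 * eta"
proof -
  define t where "t = tt x"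
  have tpos: "t > 0" using tt_pos[of x] by (simp add: t_def)
  have Np: "Nv p > 0" using Nv_pos[OF p] .
  have Qd: "Qf p x = Nv p * (t + inner x (uu p))"
    using Np by (simp add: Qf_def uu_def t_def algebra_simps)
  have "t + inner x (uu p) < eta * t" using lt Qd Np by (simp add: t_def mult.assoc)
  hence iu: "inner x (uu p) < (eta - 1) * t" by (simp add: algebra_simps)
  have uu1: "inner (uu p) (uu p) = 1" by (metis norm_uu[OF p] power2_norm_eq_inner one_power2)
  have xt: "(norm x)^2 < t^2" using tt_sq'[of x] by (simp add: t_def)
  have "(norm ((1 / t) *\<^sub>R x + uu p))^2 = (norm x)^2 / t^2 + 2 * inner x (uu p) / t + 1"
    unfolding power2_norm_eq_inner using uu1 tpos
    by (simp add: inner_add_left inner_add_right inner_commute power2_eq_square field_simps)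
  also have "\<dots> < 1 + 2 * (eta - 1) + 1"
  proof -
    have "(norm x)^2 / t^2 < 1" using xt tpos by simp
    moreover have "2 * inner x (uu p) / t < 2 * (eta - 1)" using iu tpos by (simp add: field_simps)
    ultimately show ?thesis by linarith
  qed
  finally show ?thesis by (simp add: t_def)
qed

lemma deriv_inner_part:
  fixes X a W c N :: real
  assumes "X \<ge> 0"
  shows "((\<lambda>z. N * sqrt (1 + (X + 2*z*a + z^2)) + (W + z*c)) has_real_derivative (N * a / sqrt (1+X) + c)) (at 0)"
proof -
  define g where "g = (\<lambda>z::real. 1 + (X + 2*z*a + z^2))"
  have gd: "(g has_real_derivative 2 * a) (at 0)" unfolding g_def
    by (rule DERIV_cong, (rule derivative_eq_intros refl)+) simp
  have g0: "g 0 = 1 + X" by (simp add: g_def)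
  have "((\<lambda>z. sqrt (g z)) has_real_derivative (inverse (sqrt (g 0)) / 2 * (2 * a))) (at 0)"
    using DERIV_chain2[OF DERIV_real_sqrt[of "g 0"] gd] assms g0 by simp
  hence "((\<lambda>z. sqrt (1 + (X + 2*z*a + z^2))) has_real_derivative (inverse (sqrt (1 + X)) / 2 * (2 * a))) (at 0)"
    by (simp add: g_def)
  hence d1: "((\<lambda>z. N * sqrt (1 + (X + 2*z*a + z^2))) has_real_derivative N * (inverse (sqrt (1 + X)) / 2 * (2 * a))) (at 0)"
    by (rule DERIV_cmult)
  have d2: "((\<lambda>z. W + z*c) has_real_derivative c) (at 0)"
    by (rule DERIV_cong, (rule derivative_eq_intros refl)+) simp
  have "((\<lambda>z. N * sqrt (1 + (X + 2*z*a + z^2)) + (W + z*c)) has_real_derivative (N * (inverse (sqrt (1 + X)) / 2 * (2 * a)) + c)) (at 0)"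
    by (rule DERIV_add[OF d1 d2])
  thus ?thesis by (rule DERIV_cong) (simp add: field_simps)
qed

lemma deriv_term:
  fixes X a W c N :: real
  assumes "X \<ge> 0" and pos: "N * sqrt (1 + X) + W > 0"
  shows "((\<lambda>z. B * ln (N * sqrt (1 + (X + 2*z*a + z^2)) + (W + z*c))) has_real_derivative
           (B * (N * a / sqrt (1+X) + c) / (N * sqrt (1+X) + W))) (at 0)"
proof -
  have pos': "0 < N * sqrt (1 + (X + 2*0*a + 0^2)) + (W + 0*c)" using pos by simp
  have "((\<lambda>z. ln (N * sqrt (1 + (X + 2*z*a + z^2)) + (W + z*c))) has_real_derivative
           (1 / (N * sqrt (1 + (X + 2*0*a + 0^2)) + (W + 0*c)) * (N * a / sqrt (1+X) + c))) (at 0)"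
    by (rule DERIV_chain2[OF DERIV_ln_divide[OF pos'] deriv_inner_part[OF assms(1)]])
  hence "((\<lambda>z. B * ln (N * sqrt (1 + (X + 2*z*a + z^2)) + (W + z*c))) has_real_derivative
           (B * (1 / (N * sqrt (1 + (X + 2*0*a + 0^2)) + (W + 0*c)) * (N * a / sqrt (1+X) + c)))) (at 0)"
    by (rule DERIV_cmult)
  thus ?thesis by (rule DERIV_cong) simp
qed

lemma crit:
  assumes vnz: "\<forall>i<n. v i \<noteq> 0"
    and mn: "\<forall>y. (\<Sum>i<n. b i * ln (Qf (v i) x0)) \<le> (\<Sum>i<n. b i * ln (Qf (v i) y))"
  shows "(\<Sum>i<n. b i * (Nv (v i) * x0$k / tt x0 + wv (v i) $ k) / Qf (v i) x0) = 0"
proof -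
  define e :: "real^3" where "e = axis k 1"
  define X where "X = inner x0 x0"
  define a where "a = x0$k"
  define W where "W i = inner x0 (wv (v i))" for i
  define c where "c i = wv (v i) $ k" for i
  have Qz: "Qf (v i) (x0 + z *\<^sub>R e) = Nv (v i) * sqrt (1 + (X + 2*z*a + z^2)) + (W i + z * c i)" for i z
  proof -
    have "inner (x0 + z *\<^sub>R e) (x0 + z *\<^sub>R e) = X + 2*z*a + z^2"
      by (simp add: e_def X_def a_def inner_add_left inner_add_right inner_axis inner_axis' inner_axis_axis
          inner_commute power2_eq_square algebra_simps)
    moreover have "inner (x0 + z *\<^sub>R e) (wv (v i)) = W i + z * c i"
      by (simp add: e_def W_def c_def inner_add_left inner_axis')
    ultimately show ?thesis by (simp add: Qf_def tt_def)
  qed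
  have t0: "tt x0 = sqrt (1 + X)" by (simp add: tt_def X_def)
  have Q0: "Qf (v i) x0 = Nv (v i) * sqrt (1 + X) + W i" for i by (simp add: Qf_def t0 W_def)
  have X0: "X \<ge> 0" by (simp add: X_def)
  have "((\<lambda>z. \<Sum>i<n. b i * ln (Nv (v i) * sqrt (1 + (X + 2*z*a + z^2)) + (W i + z * c i))) has_real_derivative
        (\<Sum>i<n. b i * (Nv (v i) * a / sqrt (1+X) + c i) / (Nv (v i) * sqrt (1+X) + W i))) (at 0)"
  proof (rule DERIV_sum)
    fix i assume "i \<in> {..<n}"
    hence "Nv (v i) * sqrt (1 + X) + W i > 0" using Qf_pos[of "v i" x0] vnz Q0[of i] by auto
    thus "((\<lambda>z. b i * ln (Nv (v i) * sqrt (1 + (X + 2*z*a + z^2)) + (W i + z * c i))) has_real_derivative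
        (b i * (Nv (v i) * a / sqrt (1+X) + c i) / (Nv (v i) * sqrt (1+X) + W i))) (at 0)"
      by (rule deriv_term[OF X0])
  qed
  moreover have "\<forall>y. \<bar>0 - y\<bar> < 1 \<longrightarrow> (\<Sum>i<n. b i * ln (Nv (v i) * sqrt (1 + (X + 2*0*a + 0^2)) + (W i + 0 * c i)))
      \<le> (\<Sum>i<n. b i * ln (Nv (v i) * sqrt (1 + (X + 2*y*a + y^2)) + (W i + y * c i)))"
  proof (intro allI impI)
    fix y :: real
    have "(\<Sum>i<n. b i * ln (Nv (v i) * sqrt (1 + (X + 2*0*a + 0^2)) + (W i + 0 * c i))) = (\<Sum>i<n. b i * ln (Qf (v i) x0))"
      by (simp add: Q0)
    also have "\<dots> \<le> (\<Sum>i<n. b i * ln (Qf (v i) (x0 + y *\<^sub>R e)))" using mn by blast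
    also have "\<dots> = (\<Sum>i<n. b i * ln (Nv (v i) * sqrt (1 + (X + 2*y*a + y^2)) + (W i + y * c i)))"
      by (simp add: Qz)
    finally show "(\<Sum>i<n. b i * ln (Nv (v i) * sqrt (1 + (X + 2*0*a + 0^2)) + (W i + 0 * c i)))
      \<le> (\<Sum>i<n. b i * ln (Nv (v i) * sqrt (1 + (X + 2*y*a + y^2)) + (W i + y * c i)))" .
  qed
  ultimately have "(\<Sum>i<n. b i * (Nv (v i) * a / sqrt (1+X) + c i) / (Nv (v i) * sqrt (1+X) + W i)) = 0"
    by (rule DERIV_local_min[OF _ zero_less_one])
  thus ?thesis by (simp add: t0 Q0 a_def c_def)
qed

lemma lower_bound:
  fixes n :: nat and v :: "nat \<Rightarrow> complex^2" and b :: "nat \<Rightarrow> real"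
  assumes vnz: "\<forall>i<n. v i \<noteq> 0"
    and NP: "\<forall>i<n. \<forall>k<n. i \<noteq> k \<longrightarrow> (\<forall>c. v k \<noteq> c *s v i)"
    and bpos: "\<forall>i<n. b i > 0"
    and ineq: "\<forall>j<n. b j < (\<Sum>i\<in>{..<n} - {j}. b i)"
    and n3: "n \<ge> 3"
  shows "\<exists>K0 m. m > 0 \<and> (\<forall>x. K0 + m * ln (tt x) \<le> (\<Sum>i<n. b i * ln (Qf (v i) x)))"
proof -
  define Pairs where "Pairs = {(i,k). i<n \<and> k<n \<and> i\<noteq>k}"
  have finP: "finite Pairs"
    by (rule finite_subset[of Pairs "{..<n} \<times> {..<n}"]) (auto simp: Pairs_def finite_cartesian_product)
  have neP: "(0,1) \<in> Pairs" using n3 by (simp add: Pairs_def)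
  define D where "D = (\<lambda>(i,k). norm (uu (v i) - uu (v k))) ` Pairs"
  have finD: "finite D" using finP by (simp add: D_def)
  have neD: "D \<noteq> {}" using neP by (auto simp: D_def)
  define del where "del = Min D"
  have Dpos: "\<forall>d\<in>D. d > 0"
  proof
    fix d assume "d \<in> D"
    then obtain i k where ik: "(i,k) \<in> Pairs" "d = norm (uu (v i) - uu (v k))" by (auto simp: D_def)
    have "uu (v i) \<noteq> uu (v k)"
    proof
      assume eq: "uu (v i) = uu (v k)"
      have "\<exists>c. v k = c *s v i" by (rule hopf_inj[OF _ _ eq]) (use vnz ik(1) in \<open>auto simp: Pairs_def\<close>)
      thus False using NP ik(1) by (auto simp: Pairs_def)
    qed
    thus "d > 0" using ik by simp
  qed
  have delpos: "del > 0" using Min_gr_iff[OF finD neD] Dpos by (simp add: del_def)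
  have delle: "del \<le> norm (uu (v i) - uu (v k))" if "i < n" "k < n" "i \<noteq> k" for i k
  proof -
    have "norm (uu (v i) - uu (v k)) \<in> D" using that by (force simp: D_def Pairs_def)
    thus ?thesis using Min_le[OF finD] by (simp add: del_def)
  qed
  define eta where "eta = del^2 / 8"
  have etapos: "eta > 0" using delpos by (simp add: eta_def)
  have sep: False if "i < n" "k < n" "i \<noteq> k" "Qf (v i) x < eta * Nv (v i) * tt x"
      "Qf (v k) x < eta * Nv (v k) * tt x" for i k x
  proof -
    define A where "A j = (1 / tt x) *\<^sub>R x + uu (v j)" for j
    have "norm (A j) < del / 2" if "j < n" "Qf (v j) x < eta * Nv (v j) * tt x" for j
    proof -
      have "(norm (A j))^2 < 2 * eta" using near[of "v j" x eta] vnz that by (simp add: A_def)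
      also have "\<dots> = (del / 2)^2" by (simp add: eta_def power2_eq_square)
      finally have "(norm (A j))^2 < (del / 2)^2" .
      moreover have "0 \<le> del / 2" using delpos by simp
      ultimately show ?thesis by (rule power2_less_imp_less)
    qed
    hence "norm (A i) < del / 2" "norm (A k) < del / 2" using that by auto
    moreover have "norm (uu (v i) - uu (v k)) \<le> norm (A i) + norm (A k)"
    proof -
      have "uu (v i) - uu (v k) = A i - A k" by (simp add: A_def)
      thus ?thesis by (simp add: norm_triangle_ineq4)
    qed
    ultimately show False using delle[OF that(1-3)] by linarith
  qed
  define m where "m = Min ((\<lambda>j. (\<Sum>i\<in>{..<n}-{j}. b i) - b j) ` {..<n})"
  have mpos: "m > 0"
  proof -
    have fin: "finite ((\<lambda>j. (\<Sum>i\<in>{..<n}-{j}. b i) - b j) ` {..<n})" by simp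
    have ne: "(\<lambda>j. (\<Sum>i\<in>{..<n}-{j}. b i) - b j) ` {..<n} \<noteq> {}" using n3 by (auto simp: lessThan_empty_iff)
    have "\<forall>a\<in>(\<lambda>j. (\<Sum>i\<in>{..<n}-{j}. b i) - b j) ` {..<n}. 0 < a" using ineq by auto
    thus ?thesis unfolding m_def using Min_gr_iff[OF fin ne] by blast
  qed
  have mle: "m \<le> (\<Sum>i\<in>{..<n}-{j}. b i) - b j" if "j < n" for j
    unfolding m_def using that by (intro Min_le) auto
  define c0 where "c0 = \<bar>ln eta\<bar> + ln 2"
  define K0 where "K0 = (\<Sum>i<n. b i * (ln (Nv (v i)) - c0))"
  have good: "ln (Qf (v i) x) \<ge> ln (Nv (v i)) - c0 + ln (tt x)"
    if "i < n" "Qf (v i) x \<ge> eta * Nv (v i) * tt x" for i x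
  proof -
    have Np: "Nv (v i) > 0" using Nv_pos vnz that by auto
    have tp: "tt x > 0" using tt_pos[of x] by linarith
    have Qp: "Qf (v i) x > 0" using Qf_pos[of "v i" x] vnz that(1) by auto
    have "ln (eta * Nv (v i) * tt x) \<le> ln (Qf (v i) x)"
      using that etapos Np tp Qp by (subst ln_le_cancel_iff) auto
    moreover have "ln (eta * Nv (v i) * tt x) = ln eta + ln (Nv (v i)) + ln (tt x)"
      using etapos Np tp by (simp add: ln_mult)
    moreover have "ln eta \<ge> - c0" using abs_ge_minus_self[of "ln eta"] ln_ge_zero[of "2::real"] unfolding c0_def by linarith
    ultimately show ?thesis by linarith
  qed
  have any: "ln (Qf (v i) x) \<ge> ln (Nv (v i)) - c0 - ln (tt x)" if "i < n" for i x
  proof -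
    have Np: "Nv (v i) > 0" using Nv_pos vnz that by auto
    have tp: "tt x > 0" using tt_pos[of x] by linarith
    have "Nv (v i) / (2 * tt x) \<le> Nv (v i) / (tt x + norm x)"
      using Np tp tt_gt_norm[of x] norm_ge_zero[of x] by (intro divide_left_mono) (auto intro!: mult_pos_pos add_pos_nonneg simp: tp)
    also have "\<dots> \<le> Qf (v i) x" by (rule Qf_lower)
    finally have "ln (Nv (v i) / (2 * tt x)) \<le> ln (Qf (v i) x)"
      using Np tp Qf_pos[of "v i" x] vnz that by (subst ln_le_cancel_iff) auto
    moreover have "ln (Nv (v i) / (2 * tt x)) = ln (Nv (v i)) - ln 2 - ln (tt x)"
      using Np tp by (simp add: ln_div ln_mult)
    moreover have "ln 2 \<le> c0" by (simp add: c0_def)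
    ultimately show ?thesis by linarith
  qed
  have "K0 + m * ln (tt x) \<le> (\<Sum>i<n. b i * ln (Qf (v i) x))" for x
  proof -
    have lnt: "ln (tt x) \<ge> 0" using tt_pos[of x] by simp
    show ?thesis
    proof (cases "\<forall>i<n. Qf (v i) x \<ge> eta * Nv (v i) * tt x")
      case True
      have "(\<Sum>i<n. b i * ((ln (Nv (v i)) - c0) + ln (tt x))) \<le> (\<Sum>i<n. b i * ln (Qf (v i) x))"
        using True good bpos by (intro sum_mono mult_left_mono) (auto simp: less_imp_le)
      moreover have "(\<Sum>i<n. b i * ((ln (Nv (v i)) - c0) + ln (tt x))) = K0 + (\<Sum>i<n. b i) * ln (tt x)"
        by (simp add: K0_def distrib_left sum.distrib sum_distrib_right)
      moreover have "m \<le> (\<Sum>i<n. b i)"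
      proof -
        have "0 < n" using n3 by simp
        have "(\<Sum>i<n. b i) = b 0 + (\<Sum>i\<in>{..<n}-{0}. b i)" using \<open>0 < n\<close> by (simp add: sum.remove)
        moreover have "b 0 > 0" using bpos \<open>0 < n\<close> by simp
        ultimately show ?thesis using mle[OF \<open>0 < n\<close>] by linarith
      qed
      ultimately show ?thesis using lnt by (smt (verit) mult_right_mono)
    next
      case False
      then obtain j where j: "j < n" "Qf (v j) x < eta * Nv (v j) * tt x" by (auto simp: not_le)
      have oth: "Qf (v i) x \<ge> eta * Nv (v i) * tt x" if "i \<in> {..<n}-{j}" for i
        using sep[of i j x] that j by (force simp: not_less)
      have S1: "(\<Sum>i<n. b i * ln (Qf (v i) x)) = b j * ln (Qf (v j) x) + (\<Sum>i\<in>{..<n}-{j}. b i * ln (Qf (v i) x))"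
        using j by (simp add: sum.remove)
      have S2: "K0 = b j * (ln (Nv (v j)) - c0) + (\<Sum>i\<in>{..<n}-{j}. b i * (ln (Nv (v i)) - c0))"
        using j by (simp add: K0_def sum.remove)
      have T1: "b j * (ln (Nv (v j)) - c0 - ln (tt x)) \<le> b j * ln (Qf (v j) x)"
        using any[OF j(1)] bpos j by (intro mult_left_mono) auto
      have T2: "(\<Sum>i\<in>{..<n}-{j}. b i * ((ln (Nv (v i)) - c0) + ln (tt x))) \<le> (\<Sum>i\<in>{..<n}-{j}. b i * ln (Qf (v i) x))"
        using oth good bpos by (intro sum_mono mult_left_mono) (auto simp: less_imp_le)
      have T3: "(\<Sum>i\<in>{..<n}-{j}. b i * ((ln (Nv (v i)) - c0) + ln (tt x)))
          = (\<Sum>i\<in>{..<n}-{j}. b i * (ln (Nv (v i)) - c0)) + (\<Sum>i\<in>{..<n}-{j}. b i) * ln (tt x)"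
        by (simp add: distrib_left sum.distrib sum_distrib_right)
      have "m * ln (tt x) \<le> ((\<Sum>i\<in>{..<n}-{j}. b i) - b j) * ln (tt x)"
        using mle[OF j(1)] lnt by (rule mult_right_mono)
      thus ?thesis using S1 S2 T1 T2 T3 by (simp add: algebra_simps)
    qed
  qed
  thus ?thesis using mpos by blast
qed

lemma cont_Qf: "continuous_on UNIV (\<lambda>x. Qf p x)"
  unfolding Qf_def tt_def by (intro continuous_intros)

lemma cont_F:
  assumes vnz: "\<forall>i<n. v i \<noteq> 0"
  shows "continuous_on S (\<lambda>x. \<Sum>i<(n::nat). b i * ln (Qf (v i) x))"
proof (intro continuous_on_sum continuous_on_mult continuous_on_const continuous_on_ln)
  fix i assume "i \<in> {..<n}"
  thus "\<forall>x\<in>S. Qf (v i) x \<noteq> 0" using Qf_pos vnz by (metis lessThan_iff less_irrefl)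
  show "continuous_on S (\<lambda>x. Qf (v i) x)" using cont_Qf continuous_on_subset by blast
qed

lemma exists_min:
  fixes n :: nat and v :: "nat \<Rightarrow> complex^2" and b :: "nat \<Rightarrow> real"
  assumes vnz: "\<forall>i<n. v i \<noteq> 0" and mpos: "m > 0"
    and lb: "\<forall>x. K0 + m * ln (tt x) \<le> (\<Sum>i<n. b i * ln (Qf (v i) x))"
  shows "\<exists>x0. \<forall>y. (\<Sum>i<n. b i * ln (Qf (v i) x0)) \<le> (\<Sum>i<n. b i * ln (Qf (v i) y))"
proof -
  define F where "F x = (\<Sum>i<n. b i * ln (Qf (v i) x))" for x
  define R0 where "R0 = exp ((F 0 - K0 + 1) / m)"
  have R0pos: "R0 > 0" by (simp add: R0_def)
  obtain x0 where x0: "x0 \<in> cball 0 R0" "\<forall>y\<in>cball 0 R0. F x0 \<le> F y"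
    using continuous_attains_inf[OF compact_cball, of 0 R0 F] cont_F[OF vnz, of "cball 0 R0" b] R0pos
    unfolding F_def by fastforce
  have "F x0 \<le> F y" for y
  proof (cases "y \<in> cball 0 R0")
    case True thus ?thesis using x0 by blast
  next
    case False
    hence ny: "norm y > R0" by simp
    have "tt y > R0" using ny tt_gt_norm[of y] by linarith
    hence "ln (tt y) > ln R0" using R0pos by simp
    also have "ln R0 = (F 0 - K0 + 1) / m" by (simp add: R0_def)
    finally have "m * ln (tt y) > F 0 - K0 + 1" using mpos by (simp add: field_simps)
    hence "F y > F 0 + 1" using lb[rule_format, of y] unfolding F_def by linarith
    moreover have "F x0 \<le> F 0" using x0 R0pos by simp
    ultimately show ?thesis by simp
  qed
  thus ?thesis unfolding F_def by blast
qed

lemma existence: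
  fixes n :: nat and v :: "nat \<Rightarrow> complex^2" and b :: "nat \<Rightarrow> real"
  assumes vnz: "\<forall>i<n. v i \<noteq> 0"
    and NP: "\<forall>i<n. \<forall>k<n. i \<noteq> k \<longrightarrow> (\<forall>c. v k \<noteq> c *s v i)"
    and bpos: "\<forall>i<n. b i > 0"
    and ineq: "\<forall>j<n. b j < (\<Sum>i\<in>{..<n} - {j}. b i)"
    and n3: "n \<ge> 3"
  shows "\<exists>h. herm_ip h \<and> Kc n v b h"
proof -
  obtain K0 m where m: "m > 0" "\<forall>x. K0 + m * ln (tt x) \<le> (\<Sum>i<n. b i * ln (Qf (v i) x))"
    using lower_bound[OF vnz NP bpos ineq n3] by blast
  obtain x0 where x0: "\<forall>y. (\<Sum>i<n. b i * ln (Qf (v i) x0)) \<le> (\<Sum>i<n. b i * ln (Qf (v i) y))"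
    using exists_min[OF vnz m] by blast
  have "Kc n v b (hx x0)"
    by (rule grad_Kc[OF vnz]) (rule crit[OF vnz x0])
  thus ?thesis using herm_hx by blast
qed

lemma line_eq:
  fixes c :: complex and w :: "complex^2"
  assumes "c \<noteq> 0"
  shows "range (\<lambda>d::complex. d *s (c *s w)) = range (\<lambda>d. d *s w)"
proof
  show "range (\<lambda>d::complex. d *s (c *s w)) \<subseteq> range (\<lambda>d. d *s w)"
    by (auto simp: vector_smult_assoc)
  show "range (\<lambda>d::complex. d *s w) \<subseteq> range (\<lambda>d. d *s (c *s w))"
  proof
    fix y assume "y \<in> range (\<lambda>d::complex. d *s w)"
    then obtain d where "y = d *s w" by blast
    hence "y = (d / c) *s (c *s w)" using assms by (simp add: vector_smult_assoc)
    thus "y \<in> range (\<lambda>d. d *s (c *s w))" by blast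
  qed
qed

theorem proposition4:
  fixes n :: nat and L :: "nat \<Rightarrow> (complex^2) set" and a :: "nat \<Rightarrow> real"
  assumes "n \<ge> 3"
    and "\<forall>i<n. complex_line (L i)"
    and "inj_on L {..<n}"
    and "\<forall>i<n. a i \<noteq> 0"
    and "(\<forall>i<n. a i > 0) \<or> (\<forall>i<n. a i < 0)"
  shows "((\<exists>h. dunkl_adapted n L a h) \<longleftrightarrow> (\<forall>j<n. \<bar>a j\<bar> < (\<Sum>i\<in>{..<n} - {j}. \<bar>a i\<bar>)))
       \<and> ((\<forall>j<n. \<bar>a j\<bar> < (\<Sum>i\<in>{..<n} - {j}. \<bar>a i\<bar>)) \<longrightarrow>
            (\<forall>h1 h2. dunkl_adapted n L a h1 \<and> dunkl_adapted n L a h2 \<longrightarrow>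
               (\<exists>r::real. r > 0 \<and> (\<forall>x y. h2 x y = complex_of_real r * h1 x y))))"
proof -
  have "\<forall>i. \<exists>w. i < n \<longrightarrow> (w \<noteq> 0 \<and> L i = range (\<lambda>c::complex. c *s w))"
    using assms(2) unfolding complex_line_def by blast
  then obtain v where v: "\<forall>i. i < n \<longrightarrow> (v i \<noteq> 0 \<and> L i = range (\<lambda>c::complex. c *s v i))"
    using choice[of "\<lambda>i w. i < n \<longrightarrow> (w \<noteq> 0 \<and> L i = range (\<lambda>c::complex. c *s w))"] by blast
  have vL: "\<forall>i<n. v i \<noteq> 0 \<and> L i = range (\<lambda>c::complex. c *s v i)" using v by blast
  have vnz: "\<forall>i<n. v i \<noteq> 0" using v by blast
  have NP: "\<forall>i<n. \<forall>k<n. i \<noteq> k \<longrightarrow> (\<forall>c. v k \<noteq> c *s v i)"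
  proof (intro allI impI)
    fix i k c assume ik: "i < n" "k < n" "i \<noteq> k"
    show "v k \<noteq> c *s v i"
    proof
      assume e: "v k = c *s v i"
      hence "c \<noteq> 0" using vnz ik by auto
      hence "L k = L i" using v ik e line_eq[of c "v i"] by simp
      thus False using assms(3) ik by (simp add: inj_on_def)
    qed
  qed
  define b where "b i = \<bar>a i\<bar>" for i
  have bpos: "\<forall>i<n. b i > 0" using assms(4) by (simp add: b_def)
  have Kab: "Kc n v a h \<longleftrightarrow> Kc n v b h" for h
  proof (cases "\<forall>i<n. a i > 0")
    case True
    show ?thesis by (rule Kc_cong) (metis True abs_of_pos b_def)
  next
    case False
    hence neg: "\<forall>i<n. a i < 0" using assms(5) by blast
    have "Kc n v b h \<longleftrightarrow> Kc n v (\<lambda>i. - a i) h" by (rule Kc_cong) (metis neg abs_of_neg b_def)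
    thus ?thesis using Kc_neg by simp
  qed
  have D: "dunkl_adapted n L a h \<longleftrightarrow> herm_ip h \<and> Kc n v b h" for h
    using dunkl_iff[OF _ vL, of h a] Kab unfolding dunkl_adapted_def by blast
  have ineq_iff: "(\<forall>j<n. \<bar>a j\<bar> < (\<Sum>i\<in>{..<n} - {j}. \<bar>a i\<bar>)) \<longleftrightarrow> (\<forall>j<n. b j < (\<Sum>i\<in>{..<n} - {j}. b i))"
    by (simp add: b_def)
  have P1: "(\<exists>h. dunkl_adapted n L a h) \<longleftrightarrow> (\<forall>j<n. \<bar>a j\<bar> < (\<Sum>i\<in>{..<n} - {j}. \<bar>a i\<bar>))"
  proof
    assume "\<exists>h. dunkl_adapted n L a h"
    then obtain h where h: "herm_ip h" "Kc n v b h" using D by blast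
    have "\<forall>j<n. b j < (\<Sum>i\<in>{..<n} - {j}. b i)"
      using necessity[OF h bpos vnz NP assms(1)] by blast
    thus "\<forall>j<n. \<bar>a j\<bar> < (\<Sum>i\<in>{..<n} - {j}. \<bar>a i\<bar>)" using ineq_iff by blast
  next
    assume "\<forall>j<n. \<bar>a j\<bar> < (\<Sum>i\<in>{..<n} - {j}. \<bar>a i\<bar>)"
    hence "\<forall>j<n. b j < (\<Sum>i\<in>{..<n} - {j}. b i)" using ineq_iff by blast
    then obtain h where "herm_ip h" "Kc n v b h" using existence[OF vnz NP bpos _ assms(1)] by blast
    thus "\<exists>h. dunkl_adapted n L a h" using D by blast
  qed
  have P2: "\<forall>h1 h2. dunkl_adapted n L a h1 \<and> dunkl_adapted n L a h2 \<longrightarrow>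
               (\<exists>r::real. r > 0 \<and> (\<forall>x y. h2 x y = complex_of_real r * h1 x y))"
  proof (intro allI impI)
    fix h1 h2 assume "dunkl_adapted n L a h1 \<and> dunkl_adapted n L a h2"
    hence "herm_ip h1" "Kc n v b h1" "herm_ip h2" "Kc n v b h2" using D by blast+
    thus "\<exists>r::real. r > 0 \<and> (\<forall>x y. h2 x y = complex_of_real r * h1 x y)"
      using uniqueness[OF _ _ _ _ bpos vnz NP assms(1)] by blast
  qed
  show ?thesis using P1 P2 by blast
qed


end
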